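(* Let $1\le k\le n$, $h=\mathcal D_K(x^{\epsilon_k+\epsilon_{-k}})$, $e=\mathcal D_K(x^{\epsilon_k+\epsilon_0})$ (so $[h,e]=e$). The twist of the standard Hopf algebra $U(\mathbf K^+_{\mathbb Z})[[t]]$ by $\mathcal F=\sum_{r\ge0}\frac{(-1)^r}{r!}h^{[r]}\otimes e^rt^r$, with product undeformed, satisfies for all $\alpha\in\mathbb Z^{2n+1}_{\ge0}$: $$\Delta(\mathcal D_K(x^\alpha))=\mathcal D_K(x^\alpha)\otimes(1-et)^{\alpha_k-\alpha_{-k}}+\sum_{\ell\ge0}\sum_{j=0}^{\ell}(-1)^\ell A_jB_{\ell-j}\,h^{\langle\ell\rangle}\otimes(1-et)^{-\ell}\mathcal D_K\big(x^{\alpha+(\ell-j)\epsilon_k+j(\epsilon_0-\epsilon_{-k})}\big)t^\ell,$$ $$S(\mathcal D_K(x^\alpha))=-(1-et)^{\alpha_{-k}-\alpha_k}\sum_{\ell\ge0}\sum_{j=0}^{\ell}A_jB_{\ell-j}\,\mathcal D_K\big(x^{\alpha+(\ell-j)\epsilon_k+j(\epsilon_0-\epsilon_{-k})}\big)h_1^{\langle\ell\rangle}t^\ell,$$ $\varepsilon(\mathcal D_K(x^\alpha))=0$, where $A_j=\frac1{j!}\prod_{i=0}^{j-1}(i-\alpha_{-k})$ and $B_{\ell-j}=\frac1{(\ell-j)!}\prod_{i=0}^{\ell-j-1}(\|\alpha\|-\alpha_0+i)$ (empty products $=1$).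
   Context: Let $\mathbb F$ be a field of characteristic $0$ and $n\ge1$. Coordinates are indexed by $\{-n,\dots,-1,0,1,\dots,n\}$; $\epsilon_i\in\mathbb Z^{2n+1}$ is the $i$-th unit vector and, for $\alpha\in\mathbb Z^{2n+1}$, $x^\alpha=\prod_i x_i^{\alpha_i}$ in $\mathbb F[x_{-n}^{\pm1},\dots,x_n^{\pm1}]$. Define the derivation $\mathcal D_K(x^\alpha)=\big(2-\sum_{i=1}^n(\alpha_i+\alpha_{-i})\big)x^\alpha\frac{\partial}{\partial x_0}+\sum_{i=1}^n\Big[(\alpha_0x^{\alpha+\epsilon_i-\epsilon_0}+\alpha_{-i}x^{\alpha-\epsilon_{-i}})\frac{\partial}{\partial x_i}+(\alpha_0x^{\alpha+\epsilon_{-i}-\epsilon_0}-\alpha_ix^{\alpha-\epsilon_i})\frac{\partial}{\partial x_{-i}}\Big]$, extended linearly. The generalized Cartan type $K$ Lie algebra $\mathbf K$ is the Lie algebra of derivations (commutator bracket) with basis $\{\mathcal D_K(x^\alpha):\alpha\in\mathbb Z^{2n+1}\}$; explicitly $[\mathcal D_K(x^\alpha),\mathcal D_K(x^\beta)]=\mathcal D_K\Big(\big((2-\sum_{i=1}^n(\alpha_i+\alpha_{-i}))\beta_0-(2-\sum_{i=1}^n(\beta_i+\beta_{-i}))\alpha_0\big)x^{\alpha+\beta-\epsilon_0}+\sum_{i=1}^n(\alpha_{-i}\beta_i-\alpha_i\beta_{-i})x^{\alpha+\beta-\epsilon_i-\epsilon_{-i}}\Big)$. $\mathbf K^+_{\mathbb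 Z}$ is the $\mathbb Z$-span of $\mathcal D_K(x^\alpha)$, $\alpha\in\mathbb Z_{\ge0}^{2n+1}$. Also $|\alpha|=\sum_{i=-n}^n\alpha_i$ and $\|\alpha\|=|\alpha|+\alpha_0-2$. For an element $x$ of a unital algebra, a scalar $a$ and $m\ge0$: $x_a^{\langle m\rangle}=(x+a)(x+a+1)\cdots(x+a+m-1)$, $x_a^{[m]}=(x+a)(x+a-1)\cdots(x+a-m+1)$, $x^{\langle m\rangle}=x_0^{\langle m\rangle}$, $x^{[m]}=x_0^{[m]}$ (empty products $=1$). $U(L)[[t]]$ carries the standard Hopf structure $\Delta_0(y)=y\otimes1+1\otimes y$, $S_0(y)=-y$, $\varepsilon(y)=0$ for $y\in L$ (extended $t$-adically). Twisting by an invertible $\mathcal F$ means: same product and counit, $\Delta(a)=\mathcal F\Delta_0(a)\mathcal F^{-1}$, $S(a)=vS_0(a)v^{-1}$ with $v=m(\mathrm{Id}\otimes S_0)(\mathcal F)$. For $c\in\mathbb Z$, $(1-et)^c$ is the binomial power series in $t$. *)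

theory Defs
  imports Complex_Main "HOL-Library.Poly_Mapping"
begin

text \<open>Elements of the free associative algebra on generators of type 'g with
coefficients in 'a: finitely supported functions on words.\<close>

type_synonym ('g, 'a) falg = "'g list \<Rightarrow>\<^sub>0 'a"

definition fa_mult :: "('g,'a::comm_ring_1) falg \<Rightarrow> ('g,'a) falg \<Rightarrow> ('g,'a) falg" where
  "fa_mult p q = (\<Sum>u\<in>Poly_Mapping.keys p. \<Sum>v\<in>Poly_Mapping.keys q. Poly_Mapping.single (u @ v) (Poly_Mapping.lookup p u * Poly_Mapping.lookup q v))"

definition fa_const :: "'a::comm_ring_1 \<Rightarrow> ('g,'a) falg" where
  "fa_const c = Poly_Mapping.single [] c"

definition fa_smult :: "'a::comm_ring_1 \<Rightarrow> ('g,'a) falg \<Rightarrow> ('g,'a) falg" where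
  "fa_smult c p = fa_mult (fa_const c) p"

definition fa_gen :: "'g \<Rightarrow> ('g,'a::comm_ring_1) falg" where
  "fa_gen g = Poly_Mapping.single [g] 1"

definition fa_map :: "('g \<Rightarrow> 'h) \<Rightarrow> ('g,'a::comm_ring_1) falg \<Rightarrow> ('h,'a) falg" where
  "fa_map f p = (\<Sum>u\<in>Poly_Mapping.keys p. Poly_Mapping.single (map f u) (Poly_Mapping.lookup p u))"

text \<open>Standard antipode S0: the anti-automorphism with S0(y) = -y on generators.\<close>
definition fa_antipode :: "('g,'a::comm_ring_1) falg \<Rightarrow> ('g,'a) falg" where
  "fa_antipode p = (\<Sum>u\<in>Poly_Mapping.keys p. Poly_Mapping.single (rev u) ((-1) ^ length u * Poly_Mapping.lookup p u))"

text \<open>Standard counit: algebra map sending all generators to 0.\<close>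
definition fa_counit :: "('g,'a::comm_ring_1) falg \<Rightarrow> 'a" where
  "fa_counit p = Poly_Mapping.lookup p []"

primrec fa_pow :: "('g,'a::comm_ring_1) falg \<Rightarrow> nat \<Rightarrow> ('g,'a) falg" where
  "fa_pow x 0 = fa_const 1"
| "fa_pow x (Suc m) = fa_mult x (fa_pow x m)"

text \<open>x_a^<m> = (x+a)(x+a+1)...(x+a+m-1) and x_a^[m] = (x+a)(x+a-1)...(x+a-m+1).\<close>
definition fa_rising :: "('g,'a::comm_ring_1) falg \<Rightarrow> 'a \<Rightarrow> nat \<Rightarrow> ('g,'a) falg" where
  "fa_rising x a m = foldr (\<lambda>i acc. fa_mult (x + fa_const (a + of_nat i)) acc) [0..<m] (fa_const 1)"

definition fa_falling :: "('g,'a::comm_ring_1) falg \<Rightarrow> 'a \<Rightarrow> nat \<Rightarrow> ('g,'a) falg" where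
  "fa_falling x a m = foldr (\<lambda>i acc. fa_mult (x + fa_const (a - of_nat i)) acc) [0..<m] (fa_const 1)"

inductive_set two_sided_ideal :: "('g,'a::comm_ring_1) falg set \<Rightarrow> ('g,'a) falg set"
  for R :: "('g,'a) falg set" where
  gen: "r \<in> R \<Longrightarrow> r \<in> two_sided_ideal R"
| zero: "0 \<in> two_sided_ideal R"
| add: "x \<in> two_sided_ideal R \<Longrightarrow> y \<in> two_sided_ideal R \<Longrightarrow> x + y \<in> two_sided_ideal R"
| lmult: "x \<in> two_sided_ideal R \<Longrightarrow> fa_mult a x \<in> two_sided_ideal R"
| rmult: "x \<in> two_sided_ideal R \<Longrightarrow> fa_mult x a \<in> two_sided_ideal R"

type_synonym ('g, 'a) fps_falg = "nat \<Rightarrow> ('g,'a) falg"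

definition ps_mult :: "('g,'a::comm_ring_1) fps_falg \<Rightarrow> ('g,'a) fps_falg \<Rightarrow> ('g,'a) fps_falg" where
  "ps_mult f g d = (\<Sum>i\<le>d. fa_mult (f i) (g (d - i)))"

definition ps_const :: "('g,'a::comm_ring_1) falg \<Rightarrow> ('g,'a) fps_falg" where
  "ps_const x d = (if d = 0 then x else 0)"

text \<open>Inverse of a power series whose constant term is 1 (right inverse, which is
the two-sided inverse).\<close>
fun ps_inv :: "('g,'a::comm_ring_1) fps_falg \<Rightarrow> nat \<Rightarrow> ('g,'a) falg" where
  "ps_inv f m = (if m = 0 then fa_const 1
     else - (\<Sum>j\<in>{..<m}. fa_mult (f (m - j)) (ps_inv f j)))"

text \<open>Equality of power series in the quotient algebra (free algebra modulo I).\<close>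
definition ps_cong :: "('g,'a::comm_ring_1) falg set \<Rightarrow> ('g,'a) fps_falg \<Rightarrow> ('g,'a) fps_falg \<Rightarrow> bool" where
  "ps_cong I f g \<longleftrightarrow> (\<forall>d. f d - g d \<in> I)"

definition oneminus_pow :: "('g,'a::field_char_0) falg \<Rightarrow> 'a \<Rightarrow> ('g,'a) fps_falg" where
  "oneminus_pow x c m = fa_smult ((-1) ^ m * (c gchoose m)) (fa_pow x m)"

text \<open>Exponent vectors alpha in Z^(2n+1), indices -n..n, as functions int => int
vanishing outside [-n,n].\<close>
definition Kidx :: "nat \<Rightarrow> (int \<Rightarrow> int) set" where
  "Kidx n = {\<alpha>. \<forall>i. (i < - int n \<or> i > int n) \<longrightarrow> \<alpha> i = 0}"

definition eps :: "int \<Rightarrow> int \<Rightarrow> int" where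
  "eps i = (\<lambda>j. if j = i then 1 else 0)"

text \<open>The bracket [D_K(x^a), D_K(x^b)], as a linear combination of basis elements
(degree one elements of the free algebra).\<close>
definition Kbracket :: "nat \<Rightarrow> (int \<Rightarrow> int) \<Rightarrow> (int \<Rightarrow> int) \<Rightarrow> (int \<Rightarrow> int, 'a::comm_ring_1) falg" where
  "Kbracket n a b =
     fa_smult (of_int ((2 - (\<Sum>i\<in>{1..int n}. a i + a (-i))) * b 0
                      - (2 - (\<Sum>i\<in>{1..int n}. b i + b (-i))) * a 0))
              (fa_gen (\<lambda>j. a j + b j - eps 0 j))
   + (\<Sum>i\<in>{1..int n}. fa_smult (of_int (a (-i) * b i - a i * b (-i)))
              (fa_gen (\<lambda>j. a j + b j - eps i j - eps (-i) j)))"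

text \<open>Defining relations of U(K): xy - yx - [x,y] for basis elements x, y.\<close>
definition relU :: "nat \<Rightarrow> (int \<Rightarrow> int, 'a::comm_ring_1) falg set" where
  "relU n = {fa_mult (fa_gen a) (fa_gen b) - fa_mult (fa_gen b) (fa_gen a) - Kbracket n a b
             | a b. a \<in> Kidx n \<and> b \<in> Kidx n}"

definition IU :: "nat \<Rightarrow> (int \<Rightarrow> int, 'a::comm_ring_1) falg set" where
  "IU n = two_sided_ideal (relU n)"

text \<open>U(K) (x) U(K): free algebra on two copies (Inl / Inr) of the basis modulo the
relations of U(K) in each copy and commutation between the copies.\<close>
definition relUU :: "nat \<Rightarrow> ((int \<Rightarrow> int) + (int \<Rightarrow> int), 'a::comm_ring_1) falg set" where
  "relUU n = fa_map Inl ` relU n \<union> fa_map Inr ` relU n \<union>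
     {fa_mult (fa_gen (Inl a)) (fa_gen (Inr b)) - fa_mult (fa_gen (Inr b)) (fa_gen (Inl a))
       | a b. a \<in> Kidx n \<and> b \<in> Kidx n}"

definition IUU :: "nat \<Rightarrow> ((int \<Rightarrow> int) + (int \<Rightarrow> int), 'a::comm_ring_1) falg set" where
  "IUU n = two_sided_ideal (relUU n)"

definition tensor :: "('g,'a::comm_ring_1) falg \<Rightarrow> ('g,'a) falg \<Rightarrow> ('g + 'g,'a) falg" where
  "tensor x y = fa_mult (fa_map Inl x) (fa_map Inr y)"

text \<open>Standard coproduct Delta0: algebra map with y |-> y (x) 1 + 1 (x) y on generators.\<close>
definition fa_coprod0 :: "('g,'a::comm_ring_1) falg \<Rightarrow> ('g + 'g,'a) falg" where
  "fa_coprod0 p = (\<Sum>u\<in>Poly_Mapping.keys p. fa_smult (Poly_Mapping.lookup p u)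
      (foldr (\<lambda>g acc. fa_mult (fa_gen (Inl g) + fa_gen (Inr g)) acc) u (fa_const 1)))"

definition hK :: "int \<Rightarrow> (int \<Rightarrow> int, 'a::comm_ring_1) falg" where
  "hK k = fa_gen (\<lambda>j. eps k j + eps (-k) j)"

definition eK :: "int \<Rightarrow> (int \<Rightarrow> int, 'a::comm_ring_1) falg" where
  "eK k = fa_gen (\<lambda>j. eps k j + eps 0 j)"

text \<open>F = sum_r (-1)^r/r! h^[r] (x) e^r t^r; coefficient of t^r.\<close>
definition twistF :: "int \<Rightarrow> ((int \<Rightarrow> int) + (int \<Rightarrow> int), 'a::field_char_0) fps_falg" where
  "twistF k r = fa_smult ((-1) ^ r / fact r) (tensor (fa_falling (hK k) 0 r) (fa_pow (eK k) r))"

text \<open>v = m (Id (x) S0)(F).\<close>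
definition twistV :: "int \<Rightarrow> (int \<Rightarrow> int, 'a::field_char_0) fps_falg" where
  "twistV k r = fa_smult ((-1) ^ r / fact r) (fa_mult (fa_falling (hK k) 0 r) (fa_antipode (fa_pow (eK k) r)))"

definition twisted_coproduct :: "int \<Rightarrow> (int \<Rightarrow> int, 'a::field_char_0) falg
     \<Rightarrow> ((int \<Rightarrow> int) + (int \<Rightarrow> int), 'a) fps_falg" where
  "twisted_coproduct k x = ps_mult (ps_mult (twistF k) (ps_const (fa_coprod0 x))) (ps_inv (twistF k))"

definition twisted_antipode :: "int \<Rightarrow> (int \<Rightarrow> int, 'a::field_char_0) falg
     \<Rightarrow> (int \<Rightarrow> int, 'a) fps_falg" where
  "twisted_antipode k x = ps_mult (ps_mult (twistV k) (ps_const (fa_antipode x))) (ps_inv (twistV k))"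

definition knorm :: "nat \<Rightarrow> (int \<Rightarrow> int) \<Rightarrow> int" where
  "knorm n \<alpha> = (\<Sum>i\<in>{- int n..int n}. \<alpha> i) + \<alpha> 0 - 2"

definition Acoef :: "(int \<Rightarrow> int) \<Rightarrow> int \<Rightarrow> nat \<Rightarrow> 'a::field_char_0" where
  "Acoef \<alpha> k j = (\<Prod>i<j. of_nat i - of_int (\<alpha> (-k))) / fact j"

definition Bcoef :: "nat \<Rightarrow> (int \<Rightarrow> int) \<Rightarrow> nat \<Rightarrow> 'a::field_char_0" where
  "Bcoef n \<alpha> m = (\<Prod>i<m. of_int (knorm n \<alpha> - \<alpha> 0) + of_nat i) / fact m"

definition gam :: "(int \<Rightarrow> int) \<Rightarrow> int \<Rightarrow> nat \<Rightarrow> nat \<Rightarrow> int \<Rightarrow> int" where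
  "gam \<alpha> k l j = (\<lambda>i. \<alpha> i + int (l - j) * eps k i + int j * (eps 0 i - eps (-k) i))"

definition DeltaRHS :: "nat \<Rightarrow> int \<Rightarrow> (int \<Rightarrow> int) \<Rightarrow> ((int \<Rightarrow> int) + (int \<Rightarrow> int), 'a::field_char_0) fps_falg" where
  "DeltaRHS n k \<alpha> d =
     tensor (fa_gen \<alpha>) (oneminus_pow (eK k) (of_int (\<alpha> k - \<alpha> (-k))) d)
   + (\<Sum>l\<le>d. \<Sum>j\<le>l. fa_smult ((-1) ^ l * Acoef \<alpha> k j * Bcoef n \<alpha> (l - j))
        (tensor (fa_rising (hK k) 0 l)
                (fa_mult (oneminus_pow (eK k) (- of_nat l) (d - l)) (fa_gen (gam \<alpha> k l j)))))"

definition SRHS :: "nat \<Rightarrow> int \<Rightarrow> (int \<Rightarrow> int) \<Rightarrow> (int \<Rightarrow> int, 'a::field_char_0) fps_falg" where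
  "SRHS n k \<alpha> d =
     - (\<Sum>l\<le>d. \<Sum>j\<le>l. fa_smult (Acoef \<alpha> k j * Bcoef n \<alpha> (l - j))
        (fa_mult (oneminus_pow (eK k) (of_int (\<alpha> (-k) - \<alpha> k)) (d - l))
                 (fa_mult (fa_gen (gam \<alpha> k l j)) (fa_rising (hK k) 1 l))))"

end

theory Submission
  imports Defs "HOL-Computational_Algebra.Formal_Power_Series" "HOL-Computational_Algebra.Polynomial"
begin


instantiation list :: (type) monoid_add
begin
definition zero_list :: "'a list" where "zero_list = []"
definition plus_list :: "'a list \<Rightarrow> 'a list \<Rightarrow> 'a list" where "plus_list u v = u @ v"
instance by standard (auto simp: zero_list_def plus_list_def)
end

lemma zl: "(0::'a list) = []" by (simp add: zero_list_def)
lemma single_one': "Poly_Mapping.single [] (1::'b::semiring_1) = 1" using single_one[where 'a="'a list"] by (simp add: zl)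
lemma single_of_nat': "Poly_Mapping.single [] (of_nat m::'b::semiring_1) = of_nat m" using single_of_nat[where 'a="'a list"] by (simp add: zl)
lemma single_of_int': "Poly_Mapping.single [] (of_int m::'b::ring_1) = of_int m" using single_of_int[where 'a="'a list"] by (simp add: zl)

lemma pm_expand_superset:
  assumes "finite K" "Poly_Mapping.keys p \<subseteq> K"
  shows "(p::'k \<Rightarrow>\<^sub>0 'b::comm_monoid_add) = (\<Sum>u\<in>K. Poly_Mapping.single u (Poly_Mapping.lookup p u))"
proof (rule poly_mapping_eqI)
  fix k
  have "Poly_Mapping.lookup (\<Sum>u\<in>K. Poly_Mapping.single u (Poly_Mapping.lookup p u)) k
      = (\<Sum>u\<in>K. (Poly_Mapping.lookup p u when u = k))"
    by (simp add: lookup_sum lookup_single)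
  also have "\<dots> = Poly_Mapping.lookup p k"
  proof (cases "k \<in> K")
    case True
    then show ?thesis using assms(1)
      by (simp add: sum.remove[of K k] when_def)
  next
    case False
    then have "k \<notin> Poly_Mapping.keys p" using assms by auto
    then show ?thesis using False by (auto simp: when_def in_keys_iff intro!: sum.neutral)
  qed
  finally show "Poly_Mapping.lookup p k = Poly_Mapping.lookup (\<Sum>u\<in>K. Poly_Mapping.single u (Poly_Mapping.lookup p u)) k" by simp
qed

lemma pm_expand:
  "(p::'k \<Rightarrow>\<^sub>0 'b::comm_monoid_add) = (\<Sum>u\<in>Poly_Mapping.keys p. Poly_Mapping.single u (Poly_Mapping.lookup p u))"
  by (rule pm_expand_superset) auto

lemma fa_mult_eq: "fa_mult p q = p * q"
proof -
  have "p * q = (\<Sum>u\<in>Poly_Mapping.keys p. Poly_Mapping.single u (Poly_Mapping.lookup p u)) *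
               (\<Sum>v\<in>Poly_Mapping.keys q. Poly_Mapping.single v (Poly_Mapping.lookup q v))"
    by (simp flip: pm_expand)
  also have "\<dots> = fa_mult p q"
    by (simp add: fa_mult_def sum_distrib_left sum_distrib_right mult_single plus_list_def)
       (rule sum.swap)
  finally show ?thesis by simp
qed

definition sc :: "'a \<Rightarrow> ('g,'a::comm_ring_1) falg" where
  "sc c = Poly_Mapping.single [] c"

lemma fa_const_eq: "fa_const c = sc c" by (simp add: fa_const_def sc_def)
lemma sc_one[simp]: "sc 1 = 1" by (simp add: sc_def single_one' single_of_nat' single_of_int')
lemma sc_zero[simp]: "sc 0 = 0" by (simp add: sc_def)
lemma sc_add: "sc (a + b) = sc a + sc b" by (simp add: sc_def single_add)
lemma sc_diff: "sc (a - b) = sc a - sc b" by (simp add: sc_def single_diff)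
lemma sc_uminus: "sc (- a) = - sc a" by (simp add: sc_def single_uminus)
lemma sc_mult: "sc (a * b) = sc a * sc b" by (simp add: sc_def mult_single plus_list_def)
lemma sc_of_nat: "sc (of_nat m) = of_nat m" by (simp add: sc_def single_one' single_of_nat' single_of_int')
lemma sc_of_int: "sc (of_int m) = of_int m" by (simp add: sc_def single_one' single_of_nat' single_of_int')
lemma sc_power: "sc (a ^ m) = sc a ^ m" by (induction m) (simp_all add: sc_mult)
lemma sc_sum: "sc (sum f A) = (\<Sum>x\<in>A. sc (f x))"
  by (induction A rule: infinite_finite_induct) (simp_all add: sc_add)

lemma sc_comm: "sc c * p = p * sc c"
proof -
  have "sc c * p = sc c * (\<Sum>u\<in>Poly_Mapping.keys p. Poly_Mapping.single u (Poly_Mapping.lookup p u))"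
    by (simp flip: pm_expand)
  also have "\<dots> = (\<Sum>u\<in>Poly_Mapping.keys p. Poly_Mapping.single u (Poly_Mapping.lookup p u)) * sc c"
    by (simp add: sc_def sum_distrib_left sum_distrib_right mult_single plus_list_def mult.commute)
  finally show ?thesis by (simp flip: pm_expand)
qed

lemma fa_smult_eq: "fa_smult c p = sc c * p"
  by (simp add: fa_smult_def fa_mult_eq fa_const_eq)

lemma fa_pow_eq: "fa_pow x m = x ^ m"
  by (induction m) (simp_all add: fa_const_eq fa_mult_eq)

lemma fa_gen_pow: "(fa_gen g :: ('g,'a::comm_ring_1) falg) ^ m = Poly_Mapping.single (replicate m g) 1"
  by (induction m) (simp_all add: fa_gen_def mult_single plus_list_def single_one[symmetric] zl)

lemma fa_map_superset:
  assumes "finite K" "Poly_Mapping.keys p \<subseteq> K"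
  shows "fa_map f p = (\<Sum>u\<in>K. Poly_Mapping.single (map f u) (Poly_Mapping.lookup p u))"
  unfolding fa_map_def
  by (rule sum.mono_neutral_left) (use assms in \<open>auto simp: in_keys_iff\<close>)

lemma fa_map_add: "fa_map f (p + q) = fa_map f p + fa_map f q"
proof -
  let ?K = "Poly_Mapping.keys p \<union> Poly_Mapping.keys q"
  have k: "Poly_Mapping.keys (p+q) \<subseteq> ?K" by (rule keys_add)
  show ?thesis
    by (simp add: fa_map_superset[OF _ k] fa_map_superset[of ?K p] fa_map_superset[of ?K q]
        lookup_add single_add sum.distrib)
qed

lemma fa_map_zero[simp]: "fa_map f 0 = 0" by (simp add: fa_map_def)

lemma fa_map_sum: "fa_map f (sum g A) = (\<Sum>x\<in>A. fa_map f (g x))"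
  by (induction A rule: infinite_finite_induct) (simp_all add: fa_map_add)

lemma fa_map_single: "fa_map f (Poly_Mapping.single u c) = Poly_Mapping.single (map f u) c"
  by (simp add: fa_map_def)

lemma fa_map_uminus: "fa_map f (- p) = - fa_map f p"
  using fa_map_add[of f p "-p"] by (simp add: add_eq_0_iff2)

lemma fa_map_diff: "fa_map f (p - q) = fa_map f p - fa_map f q"
  using fa_map_add[of f p "-q"] by (simp add: fa_map_uminus)

lemma fa_map_mult: "fa_map f (p * q) = fa_map f p * fa_map f q"
proof -
  have "fa_map f (p * q) = fa_map f ((\<Sum>u\<in>Poly_Mapping.keys p. Poly_Mapping.single u (Poly_Mapping.lookup p u)) *
               (\<Sum>v\<in>Poly_Mapping.keys q. Poly_Mapping.single v (Poly_Mapping.lookup q v)))"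
    by (simp flip: pm_expand)
  also have "\<dots> = (\<Sum>u\<in>Poly_Mapping.keys p. Poly_Mapping.single (map f u) (Poly_Mapping.lookup p u)) *
               (\<Sum>v\<in>Poly_Mapping.keys q. Poly_Mapping.single (map f v) (Poly_Mapping.lookup q v))"
    by (simp add: sum_distrib_left sum_distrib_right mult_single plus_list_def fa_map_sum fa_map_single)
  also have "\<dots> = fa_map f p * fa_map f q" by (simp add: fa_map_def)
  finally show ?thesis .
qed

lemma fa_map_sc: "fa_map f (sc c) = sc c" by (simp add: sc_def fa_map_single)
lemma fa_map_one[simp]: "fa_map f 1 = 1" using fa_map_sc[of f 1] by simp
lemma fa_map_power: "fa_map f (p ^ m) = fa_map f p ^ m" by (induction m) (simp_all add: fa_map_mult)
lemma fa_map_gen: "fa_map f (fa_gen g) = fa_gen (f g)" by (simp add: fa_gen_def fa_map_single)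
lemma fa_map_of_nat: "fa_map f (of_nat m) = of_nat m" using fa_map_sc[of f "of_nat m"] by (simp add: sc_of_nat)


subsection \<open>Evaluation of polynomials\<close>

definition evp :: "('g,'a::comm_ring_1) falg \<Rightarrow> 'a poly \<Rightarrow> ('g,'a) falg" where
  "evp x p = foldr (\<lambda>a acc. sc a + x * acc) (coeffs p) 0"

lemma evp_0[simp]: "evp x 0 = 0" by (simp add: evp_def)

lemma evp_pCons: "evp x (pCons a p) = sc a + x * evp x p"
  by (cases "p = 0 \<and> a = 0") (auto simp: evp_def cCons_def)

lemma evp_const: "evp x [:c:] = sc c" by (simp add: evp_pCons)
lemma evp_one[simp]: "evp x 1 = 1" by (simp add: one_pCons evp_const)
lemma evp_lin: "evp x [:c, 1:] = sc c + x" by (simp add: evp_pCons)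

lemma evp_add: "evp x (p + q) = evp x p + evp x q"
proof (induction p q rule: poly_induct2)
  case 0 then show ?case by simp
next
  case (pCons a p b q) then show ?case by (simp add: evp_pCons sc_add algebra_simps)
qed

lemma evp_smult: "evp x (smult a p) = sc a * evp x p"
proof (induction p)
  case 0 then show ?case by simp
next
  case (pCons b p)
  have "x * sc a = sc a * x" by (simp add: sc_comm)
  then have "x * (sc a * evp x p) = sc a * (x * evp x p)" by (metis mult.assoc)
  with pCons show ?case by (simp add: evp_pCons sc_mult algebra_simps)
qed

lemma evp_mult: "evp x (p * q) = evp x p * evp x q"
proof (induction p)
  case 0 then show ?case by simp
next
  case (pCons a p)
  then show ?case by (simp add: evp_pCons evp_add evp_smult algebra_simps)
qed

lemma evp_uminus: "evp x (- p) = - evp x p"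
  using evp_add[of x p "-p"] by (simp add: add_eq_0_iff2)
lemma evp_diff: "evp x (p - q) = evp x p - evp x q"
  using evp_add[of x p "-q"] by (simp add: evp_uminus)
lemma evp_sum: "evp x (sum f A) = (\<Sum>i\<in>A. evp x (f i))"
  by (induction A rule: infinite_finite_induct) (simp_all add: evp_add)
lemma evp_prod_list: "evp x (prod_list (map f l)) = prod_list (map (\<lambda>i. evp x (f i)) l)"
  by (induction l) (simp_all add: evp_mult)

lemma evp_map: "fa_map f (evp x p) = evp (fa_map f x) p"
  by (induction p) (simp_all add: evp_pCons fa_map_add fa_map_mult fa_map_sc)

lemma evp_sc_comm: "evp x p * sc c = sc c * evp x p" by (simp add: sc_comm)

subsection \<open>Falling and rising factorial polynomials\<close>

definition ffp :: "'a::comm_ring_1 \<Rightarrow> nat \<Rightarrow> 'a poly" where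
  "ffp a m = (\<Prod>i<m. [:a - of_nat i, 1:])"
definition rfp :: "'a::comm_ring_1 \<Rightarrow> nat \<Rightarrow> 'a poly" where
  "rfp a m = (\<Prod>i<m. [:a + of_nat i, 1:])"

lemma foldr_prod_list: "foldr (\<lambda>i acc. f i * acc) l (1::'b::monoid_mult) = prod_list (map f l)"
  by (induction l) simp_all

lemma foldr_upt_prod: "foldr (\<lambda>i acc. f i * acc) [0..<m] (1::'b::comm_monoid_mult) = (\<Prod>i<m. f i)"
  by (simp add: foldr_prod_list prod.distinct_set_conv_list[symmetric] atLeast0LessThan)

lemma fa_falling_eq: "fa_falling x a m = evp x (ffp a m)"
proof -
  have "fa_falling x a m = foldr (\<lambda>i acc. evp x [:a - of_nat i, 1:] * acc) [0..<m] 1"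
    by (simp add: fa_falling_def fa_mult_eq fa_const_eq evp_lin add.commute)
  also have "\<dots> = evp x (prod_list (map (\<lambda>i. [:a - of_nat i, 1:]) [0..<m]))"
    by (simp add: foldr_prod_list evp_prod_list)
  also have "\<dots> = evp x (ffp a m)"
    by (simp add: ffp_def prod.distinct_set_conv_list[symmetric] atLeast0LessThan)
  finally show ?thesis .
qed

lemma fa_rising_eq: "fa_rising x a m = evp x (rfp a m)"
proof -
  have "fa_rising x a m = foldr (\<lambda>i acc. evp x [:a + of_nat i, 1:] * acc) [0..<m] 1"
    by (simp add: fa_rising_def fa_mult_eq fa_const_eq evp_lin add.commute)
  also have "\<dots> = evp x (prod_list (map (\<lambda>i. [:a + of_nat i, 1:]) [0..<m]))"
    by (simp add: foldr_prod_list evp_prod_list)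
  also have "\<dots> = evp x (rfp a m)"
    by (simp add: rfp_def prod.distinct_set_conv_list[symmetric] atLeast0LessThan)
  finally show ?thesis .
qed

definition ffs :: "'a::comm_ring_1 \<Rightarrow> nat \<Rightarrow> 'a" where
  "ffs z m = (\<Prod>i<m. z - of_nat i)"

lemma poly_ffp: "poly (ffp a m) y = ffs (y + a) m"
  by (simp add: ffp_def ffs_def poly_prod algebra_simps)
lemma poly_rfp: "poly (rfp a m) y = pochhammer (y + a) m"
  by (simp add: rfp_def pochhammer_prod poly_prod algebra_simps atLeast0LessThan)

lemma ffs_gchoose: "ffs z m = fact m * (z gchoose m :: 'a::field_char_0)"
  by (simp add: ffs_def gbinomial_prod_rev atLeast0LessThan)

lemma poch_gchoose: "pochhammer z m = (-1)^m * fact m * ((- z) gchoose m :: 'a::field_char_0)"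
  by (simp add: gbinomial_pochhammer)

lemma ffs_Suc: "ffs z (Suc n) = ffs z n * (z - of_nat n)"
  by (simp add: ffs_def)
lemma ffs_split: "ffs z s * ffs (z - of_nat s) r = ffs z (s + r)"
proof (induction r)
  case 0 then show ?case by (simp add: ffs_def)
next
  case (Suc r)
  have "ffs z s * ffs (z - of_nat s) (Suc r) = (ffs z s * ffs (z - of_nat s) r) * (z - of_nat s - of_nat r)"
    by (simp only: ffs_Suc mult.assoc)
  also have "\<dots> = ffs z (s + r) * (z - of_nat (s + r))" using Suc by (simp add: algebra_simps)
  also have "\<dots> = ffs z (s + Suc r)" by (simp add: ffs_Suc)
  finally show ?case .
qed

lemma poly_ext: "(\<And>y. poly p y = poly q y) \<Longrightarrow> p = (q::'a::field_char_0 poly)"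
  by (metis poly_eq_poly_eq_iff ext)

lemma ffp_split: "ffp a s * ffp (a - of_nat s) r = ffp (a::'a::field_char_0) (s + r)"
proof (rule poly_ext)
  fix y show "poly (ffp a s * ffp (a - of_nat s) r) y = poly (ffp a (s + r)) y"
    using ffs_split[of "y + a" s r] by (simp add: poly_ffp algebra_simps)
qed

lemma rfp_split: "rfp 0 m * rfp (of_nat m) r = rfp (0::'a::field_char_0) (m + r)"
  by (rule poly_ext) (simp add: poly_rfp pochhammer_product[of m "m+r"])

lemma ffp_rfp: "ffp (of_nat m) m = rfp (1::'a::field_char_0) m"
  by (rule poly_ext) (simp add: poly_ffp poly_rfp ffs_gchoose gbinomial_pochhammer')

lemma ffp_shift: "pcompose (ffp a m) [:b, 1:] = ffp (a + b) (m::nat)" for a b :: "'a::field_char_0"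
  by (rule poly_ext) (simp add: poly_ffp poly_pcompose algebra_simps)

lemma rfp_shift: "pcompose (rfp a m) [:b, 1:] = rfp (a + b) (m::nat)" for a b :: "'a::field_char_0"
  by (rule poly_ext) (simp add: poly_rfp poly_pcompose algebra_simps)

subsection \<open>Ideals and congruences\<close>

definition isideal :: "'r::ring_1 set \<Rightarrow> bool" where
  "isideal I \<longleftrightarrow> 0 \<in> I \<and> (\<forall>a\<in>I. \<forall>b\<in>I. a + b \<in> I) \<and> (\<forall>a\<in>I. \<forall>c. c * a \<in> I \<and> a * c \<in> I)"

definition cg :: "'r::ring_1 set \<Rightarrow> 'r \<Rightarrow> 'r \<Rightarrow> bool" where
  "cg I a b \<longleftrightarrow> a - b \<in> I"

locale qr = fixes I :: "'r::ring_1 set" assumes I: "isideal I"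
begin

lemma id_zero: "0 \<in> I" using I by (simp add: isideal_def)
lemma id_add: "a \<in> I \<Longrightarrow> b \<in> I \<Longrightarrow> a + b \<in> I" using I by (simp add: isideal_def)
lemma id_lmult: "a \<in> I \<Longrightarrow> c * a \<in> I" using I by (simp add: isideal_def)
lemma id_rmult: "a \<in> I \<Longrightarrow> a * c \<in> I" using I by (simp add: isideal_def)
lemma id_uminus: "a \<in> I \<Longrightarrow> - a \<in> I" using id_lmult[of a "-1"] by simp
lemma id_diff: "a \<in> I \<Longrightarrow> b \<in> I \<Longrightarrow> a - b \<in> I" using id_add[of a "-b"] id_uminus by simp
lemma id_sum: "(\<And>i. i \<in> A \<Longrightarrow> f i \<in> I) \<Longrightarrow> sum f A \<in> I"
  by (induction A rule: infinite_finite_induct) (auto simp: id_zero id_add)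

lemma cg_refl[simp]: "cg I a a" by (simp add: cg_def id_zero)
lemma cg_eq: "a = b \<Longrightarrow> cg I a b" by simp
lemma cg_sym: "cg I a b \<Longrightarrow> cg I b a" unfolding cg_def using id_uminus by fastforce
lemma cg_trans[trans]: "cg I a b \<Longrightarrow> cg I b c \<Longrightarrow> cg I a c"
  unfolding cg_def using id_add by fastforce
lemma cg_eq_trans[trans]: "cg I a b \<Longrightarrow> b = c \<Longrightarrow> cg I a c" by simp
lemma eq_cg_trans[trans]: "a = b \<Longrightarrow> cg I b c \<Longrightarrow> cg I a c" by simp
lemma cg_add: "cg I a b \<Longrightarrow> cg I c d \<Longrightarrow> cg I (a + c) (b + d)"
  unfolding cg_def using id_add by (fastforce simp: algebra_simps)
lemma cg_uminus: "cg I a b \<Longrightarrow> cg I (- a) (- b)"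
  unfolding cg_def using id_uminus by (fastforce simp: algebra_simps)
lemma cg_diff: "cg I a b \<Longrightarrow> cg I c d \<Longrightarrow> cg I (a - c) (b - d)"
  using cg_add[of a b "-c" "-d"] cg_uminus by simp
lemma cg_mult: "cg I a b \<Longrightarrow> cg I c d \<Longrightarrow> cg I (a * c) (b * d)"
proof -
  assume "cg I a b" "cg I c d"
  then have "(a - b) * c + b * (c - d) \<in> I" unfolding cg_def using id_add id_lmult id_rmult by blast
  then show ?thesis by (simp add: cg_def algebra_simps)
qed
lemma cg_lmult: "cg I a b \<Longrightarrow> cg I (c * a) (c * b)" by (simp add: cg_mult)
lemma cg_rmult: "cg I a b \<Longrightarrow> cg I (a * c) (b * c)" by (simp add: cg_mult)
lemma cg_sum: "(\<And>i. i \<in> A \<Longrightarrow> cg I (f i) (g i)) \<Longrightarrow> cg I (sum f A) (sum g A)"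
  by (induction A rule: infinite_finite_induct) (auto simp: cg_add)
lemma cg_in: "a \<in> I \<Longrightarrow> cg I a 0" by (simp add: cg_def)
lemma cg_power_comm: "cg I (x * y) (y * x) \<Longrightarrow> cg I (x ^ m * y) (y * x ^ m)"
proof (induction m)
  case 0 then show ?case by simp
next
  case (Suc m)
  have "x ^ Suc m * y = x * (x ^ m * y)" by (simp add: mult.assoc)
  also have "cg I \<dots> (x * (y * x ^ m))" using Suc by (simp add: cg_lmult)
  also have "x * (y * x ^ m) = (x * y) * x ^ m" by (simp add: mult.assoc)
  also have "cg I \<dots> ((y * x) * x ^ m)" using Suc.prems by (simp add: cg_rmult)
  also have "(y * x) * x ^ m = y * x ^ Suc m" by (simp add: mult.assoc power_commutes)
  finally show ?case .
qed

end

lemma evp_comm_right: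
  fixes x y :: "('g,'a::comm_ring_1) falg"
  assumes I: "isideal I" and r: "cg I (x * y) (y * (x + sc b))"
  shows "cg I (evp x p * y) (y * evp x (pcompose p [:b, 1:]))"
proof -
  interpret qr I by (rule qr.intro[OF I])
  show ?thesis
proof (induction p)
  case 0 then show ?case using I by (simp add: pcompose_0)
next
  case (pCons a p)
  let ?q = "evp x (pcompose p [:b, 1:])"
  have "evp x (pCons a p) * y = sc a * y + x * (evp x p * y)"
    by (simp add: evp_pCons algebra_simps)
  also have "cg I \<dots> (sc a * y + x * (y * ?q))"
    using pCons I by (intro cg_add cg_lmult) simp_all
  also have "sc a * y + x * (y * ?q) = sc a * y + (x * y) * ?q" by (simp add: mult.assoc)
  also have "cg I \<dots> (sc a * y + (y * (x + sc b)) * ?q)"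
    using r I by (intro cg_add cg_rmult) simp_all
  also have "sc a * y + (y * (x + sc b)) * ?q = y * evp x (pcompose (pCons a p) [:b, 1:])"
    by (simp only: pcompose_pCons evp_add evp_const evp_mult evp_lin) (simp add: algebra_simps sc_comm[of a y])
  finally show ?case .
qed
qed

lemma evp_comm_left:
  fixes x y :: "('g,'a::comm_ring_1) falg"
  assumes I: "isideal I" and r: "cg I (y * x) ((x + sc b) * y)"
  shows "cg I (y * evp x p) (evp x (pcompose p [:b, 1:]) * y)"
proof -
  interpret qr I by (rule qr.intro[OF I])
  show ?thesis
proof (induction p)
  case 0 then show ?case using I by (simp add: pcompose_0)
next
  case (pCons a p)
  let ?q = "evp x (pcompose p [:b, 1:])"
  have "y * evp x (pCons a p) = y * sc a + (y * x) * evp x p"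
    by (simp add: evp_pCons algebra_simps)
  also have "cg I \<dots> (y * sc a + ((x + sc b) * y) * evp x p)"
    using r I by (intro cg_add cg_rmult) simp_all
  also have "y * sc a + ((x + sc b) * y) * evp x p = y * sc a + (x + sc b) * (y * evp x p)"
    by (simp add: mult.assoc)
  also have "cg I \<dots> (y * sc a + (x + sc b) * (?q * y))"
    using pCons I by (intro cg_add cg_lmult) simp_all
  also have "y * sc a + (x + sc b) * (?q * y) = evp x (pcompose (pCons a p) [:b, 1:]) * y"
    by (simp only: pcompose_pCons evp_add evp_const evp_mult evp_lin) (simp add: algebra_simps sc_comm[of a y])
  finally show ?case .
qed
qed


definition psI :: "'r::ring_1 set \<Rightarrow> 'r fps set" where
  "psI I = {f. \<forall>n. fps_nth f n \<in> I}"

lemma psI_ideal: assumes "isideal I" shows "isideal (psI I)"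
proof -
  interpret qr I by (rule qr.intro[OF assms])
  have 3: "\<And>a c n. \<forall>n. fps_nth a n \<in> I \<Longrightarrow> fps_nth (c * a) n \<in> I"
    unfolding fps_mult_nth by (rule id_sum) (rule id_lmult, blast)
  have 4: "\<And>a c n. \<forall>n. fps_nth a n \<in> I \<Longrightarrow> fps_nth (a * c) n \<in> I"
    unfolding fps_mult_nth by (rule id_sum) (rule id_rmult, blast)
  show ?thesis by (auto simp: isideal_def psI_def id_zero id_add 3 4)
qed

lemma cg_psI: "cg (psI I) f g \<longleftrightarrow> (\<forall>n. cg I (fps_nth f n) (fps_nth g n))"
  by (simp add: cg_def psI_def)

lemma cg_const': "isideal I \<Longrightarrow> cg I a b \<Longrightarrow> cg (psI I) (fps_const a) (fps_const b)"
  unfolding cg_psI by (auto simp: qr.cg_refl[OF qr.intro])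

lemma ps_mult_eq: "ps_mult f g = fps_nth (Abs_fps f * Abs_fps g)"
  by (rule ext) (simp add: ps_mult_def fps_mult_nth atLeast0AtMost fa_mult_eq)

lemma ps_const_eq: "ps_const x = fps_nth (fps_const x)"
  by (rule ext) (simp add: ps_const_def fps_const_def)

lemma ps_inv_right:
  assumes "f 0 = (1 :: ('g,'a::comm_ring_1) falg)"
  shows "Abs_fps f * Abs_fps (ps_inv f) = 1"
proof (rule fps_ext)
  fix m
  show "fps_nth (Abs_fps f * Abs_fps (ps_inv f)) m = fps_nth 1 m"
  proof (cases m)
    case 0 then show ?thesis using assms by (simp add: fa_const_eq del: ps_inv.simps) (simp add: fa_const_eq)
  next
    case (Suc k)
    have "fps_nth (Abs_fps f * Abs_fps (ps_inv f)) m = (\<Sum>i\<le>m. f i * ps_inv f (m - i))"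
      by (simp add: fps_mult_nth atLeast0AtMost del: ps_inv.simps)
    also have "\<dots> = f 0 * ps_inv f m + (\<Sum>i<m. f (Suc i) * ps_inv f (m - Suc i))"
      using Suc by (simp only: sum.atMost_Suc_shift) (simp add: lessThan_Suc_atMost del: ps_inv.simps)
    also have "(\<Sum>i<m. f (Suc i) * ps_inv f (m - Suc i)) = (\<Sum>j<m. f (m - j) * ps_inv f j)"
      by (rule sum.reindex_bij_witness[where i="\<lambda>j. m - Suc j" and j="\<lambda>i. m - Suc i"]) (auto simp del: ps_inv.simps)
    also have "ps_inv f m = - (\<Sum>j<m. f (m - j) * ps_inv f j)"
      using Suc by (simp add: fa_mult_eq del: ps_inv.simps) (subst ps_inv.simps, simp add: fa_mult_eq)
    finally show ?thesis using Suc assms by (simp del: ps_inv.simps)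
  qed
qed

text \<open>Shifted sums \<Sum>_m t^m a_m.\<close>
definition tsum :: "(nat \<Rightarrow> 'r::ring_1 fps) \<Rightarrow> 'r fps" where
  "tsum a = Abs_fps (\<lambda>d. \<Sum>m\<le>d. fps_nth (a m) (d - m))"

lemma tsum_nth: "fps_nth (tsum a) d = (\<Sum>m\<le>d. fps_nth (a m) (d - m))" by (simp add: tsum_def)

lemma triangle_swap:
  "(\<Sum>i\<le>d. \<Sum>m\<le>d - i. g i m) = (\<Sum>m\<le>(d::nat). \<Sum>i\<le>d - m. g i m)"
proof -
  have "(\<Sum>i\<le>d. \<Sum>m\<le>d - i. g i m) = (\<Sum>i\<le>d. \<Sum>m\<in>{m\<in>{..d}. i + m \<le> d}. g i m)"
    by (rule sum.cong) (auto intro!: sum.cong)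
  also have "\<dots> = (\<Sum>m\<le>d. \<Sum>i\<in>{i\<in>{..d}. i + m \<le> d}. g i m)"
    by (rule sum.swap_restrict) auto
  also have "\<dots> = (\<Sum>m\<le>(d::nat). \<Sum>i\<le>d - m. g i m)"
    by (rule sum.cong) (auto intro!: sum.cong)
  finally show ?thesis .
qed

lemma triangle_swap2:
  "(\<Sum>i\<le>d. \<Sum>m\<le>i. g i m) = (\<Sum>m\<le>(d::nat). \<Sum>i\<in>{m..d}. g i m)"
proof -
  have "(\<Sum>i\<le>d. \<Sum>m\<le>i. g i m) = (\<Sum>i\<le>d. \<Sum>m\<in>{m\<in>{..d}. m \<le> i}. g i m)"
    by (rule sum.cong) (auto intro!: sum.cong)
  also have "\<dots> = (\<Sum>m\<le>d. \<Sum>i\<in>{i\<in>{..d}. m \<le> i}. g i m)"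
    by (rule sum.swap_restrict) auto
  also have "\<dots> = (\<Sum>m\<le>(d::nat). \<Sum>i\<in>{m..d}. g i m)"
    by (rule sum.cong) (auto intro!: sum.cong)
  finally show ?thesis .
qed

lemma tsum_mult_left: "f * tsum a = tsum (\<lambda>m. f * a m)"
proof (rule fps_ext)
  fix d
  have "fps_nth (f * tsum a) d = (\<Sum>i\<le>d. \<Sum>m\<le>d - i. fps_nth f i * fps_nth (a m) (d - i - m))"
    by (simp add: fps_mult_nth tsum_nth atLeast0AtMost sum_distrib_left)
  also have "\<dots> = (\<Sum>m\<le>d. \<Sum>i\<le>d - m. fps_nth f i * fps_nth (a m) (d - i - m))"
    by (rule triangle_swap)
  also have "\<dots> = (\<Sum>m\<le>d. \<Sum>i\<le>d - m. fps_nth f i * fps_nth (a m) (d - m - i))"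
    by (intro sum.cong refl) (simp add: add.commute)
  also have "\<dots> = fps_nth (tsum (\<lambda>m. f * a m)) d"
    by (simp add: fps_mult_nth tsum_nth atLeast0AtMost diff_commute)
  finally show "fps_nth (f * tsum a) d = fps_nth (tsum (\<lambda>m. f * a m)) d" .
qed

lemma tsum_mult_right: "tsum a * f = tsum (\<lambda>m. a m * f)"
proof (rule fps_ext)
  fix d
  have "fps_nth (tsum a * f) d = (\<Sum>i\<le>d. \<Sum>m\<le>i. fps_nth (a m) (i - m) * fps_nth f (d - i))"
    by (simp add: fps_mult_nth tsum_nth atLeast0AtMost sum_distrib_right)
  also have "\<dots> = (\<Sum>m\<le>d. \<Sum>i\<in>{m..d}. fps_nth (a m) (i - m) * fps_nth f (d - i))"
    by (rule triangle_swap2)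
  also have "\<dots> = (\<Sum>m\<le>d. \<Sum>j\<le>d - m. fps_nth (a m) j * fps_nth f (d - m - j))"
  proof (rule sum.cong[OF refl])
    fix m assume "m \<in> {..d}"
    then show "(\<Sum>i\<in>{m..d}. fps_nth (a m) (i - m) * fps_nth f (d - i)) = (\<Sum>j\<le>d - m. fps_nth (a m) j * fps_nth f (d - m - j))"
      by (intro sum.reindex_bij_witness[where i="\<lambda>j. j + m" and j="\<lambda>i. i - m"]) auto
  qed
  also have "\<dots> = fps_nth (tsum (\<lambda>m. a m * f)) d"
    by (simp add: fps_mult_nth tsum_nth atLeast0AtMost)
  finally show "fps_nth (tsum a * f) d = fps_nth (tsum (\<lambda>m. a m * f)) d" .
qed

lemma tsum_add: "tsum (\<lambda>m. a m + b m) = tsum a + tsum b"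
  by (rule fps_ext) (simp add: tsum_nth sum.distrib)

lemma tsum_cg: "(\<And>m. cg (psI I) (a m) (b m)) \<Longrightarrow> isideal I \<Longrightarrow> cg (psI I) (tsum a) (tsum b)"
  unfolding cg_psI tsum_nth by (auto intro!: qr.cg_sum[OF qr.intro])


definition qc :: "nat \<Rightarrow> nat \<Rightarrow> nat \<Rightarrow> int" where
  "qc d l m = (-1)^m * int (d choose m) * int (pochhammer (Suc l) m)"

lemma qc_0: "qc 0 l 0 = 1" by (simp add: qc_def)

lemma qc_Suc_Suc: "qc (Suc d) l (Suc m) = qc d l (Suc m) - int (Suc l) * qc d (Suc l) m"
  by (simp add: qc_def pochhammer_rec algebra_simps)

lemma qc_Suc_0: "qc (Suc d) l 0 = qc d l 0" by (simp add: qc_def)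

lemma (in qr) Qe_pow:
  fixes Q :: "nat \<Rightarrow> 'r" and e :: 'r
  assumes Q: "\<And>m. cg I (Q m * e) (e * Q m - of_nat (Suc m) * Q (Suc m))"
  shows "cg I (Q l * e ^ d) (\<Sum>m\<le>d. of_int (qc d l m) * (e ^ (d - m) * Q (l + m)))"
proof (induction d arbitrary: l)
  case 0 then show ?case by (simp add: qc_0)
next
  case (Suc d)
  define S where "S l' = (\<Sum>m\<le>d. of_int (qc d l' m) * (e ^ (d - m) * Q (l' + m)))" for l'
  have "Q l * e ^ Suc d = (Q l * e) * e ^ d" by (simp add: mult.assoc)
  also have "cg I \<dots> ((e * Q l - of_nat (Suc l) * Q (Suc l)) * e ^ d)"
    using Q by (rule cg_rmult)
  also have "(e * Q l - of_nat (Suc l) * Q (Suc l)) * e ^ d = e * (Q l * e ^ d) - of_nat (Suc l) * (Q (Suc l) * e ^ d)"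
    by (simp add: algebra_simps)
  also have "cg I \<dots> (e * S l - of_nat (Suc l) * S (Suc l))"
    unfolding S_def by (intro cg_diff cg_lmult Suc.IH)
  also have "e * S l - of_nat (Suc l) * S (Suc l) =
     (\<Sum>m\<le>Suc d. of_int (qc (Suc d) l m) * (e ^ (Suc d - m) * Q (l + m)))"
  proof -
    define X where "X m = e ^ (Suc d - m) * Q (l + m)" for m
    have eS: "e * S l = (\<Sum>m\<le>d. of_int (qc d l m) * X m)"
      unfolding S_def X_def sum_distrib_left
    proof (rule sum.cong[OF refl])
      fix m assume "m \<in> {..d}"
      then have "Suc d - m = Suc (d - m)" by auto
      then show "e * (of_int (qc d l m) * (e ^ (d - m) * Q (l + m))) = of_int (qc d l m) * (e ^ (Suc d - m) * Q (l + m))" (is ?thesis)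
      proof -
        have "e * (of_int (qc d l m) * (e ^ (d - m) * Q (l + m))) = of_int (qc d l m) * (e * (e ^ (d - m) * Q (l + m)))"
          by (metis mult.assoc mult_of_int_commute)
        then show ?thesis using \<open>Suc d - m = Suc (d - m)\<close> by (simp add: mult.assoc)
      qed
    qed
    have eS2: "of_nat (Suc l) * S (Suc l) = (\<Sum>m\<le>d. of_int (int (Suc l) * qc d (Suc l) m) * X (Suc m))"
      unfolding S_def X_def sum_distrib_left by (intro sum.cong refl) (simp add: algebra_simps)
    have "(\<Sum>m\<le>Suc d. of_int (qc (Suc d) l m) * X m)
        = of_int (qc (Suc d) l 0) * X 0 + (\<Sum>m\<le>d. of_int (qc (Suc d) l (Suc m)) * X (Suc m))"
      by (rule sum.atMost_Suc_shift)
    also have "\<dots> = (of_int (qc d l 0) * X 0 + (\<Sum>m\<le>d. of_int (qc d l (Suc m)) * X (Suc m)))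
         - (\<Sum>m\<le>d. of_int (int (Suc l) * qc d (Suc l) m) * X (Suc m))"
      by (simp add: qc_Suc_0 qc_Suc_Suc sum_subtractf algebra_simps del: of_nat_Suc)
    also have "of_int (qc d l 0) * X 0 + (\<Sum>m\<le>d. of_int (qc d l (Suc m)) * X (Suc m))
       = (\<Sum>m\<le>Suc d. of_int (qc d l m) * X m)"
      by (rule sum.atMost_Suc_shift[symmetric])
    also have "(\<Sum>m\<le>Suc d. of_int (qc d l m) * X m) = (\<Sum>m\<le>d. of_int (qc d l m) * X m)"
      by (simp add: qc_def binomial_eq_0)
    finally show ?thesis unfolding eS eS2 X_def by simp
  qed
  finally show ?case .
qed


lemma sgn_split: "i \<le> d \<Longrightarrow> (-1::'a::comm_ring_1)^i * (-1)^(d-i) = (-1)^d"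
  by (simp add: power_add[symmetric])

lemma vdm: "(\<Sum>i\<le>d. (a gchoose i) * (b gchoose (d - i))) = ((a + b) gchoose d :: 'a::field_char_0)"
  using gbinomial_Vandermonde[of a b d] by (simp add: atLeast0AtMost)

lemma vdm_sgn: "(\<Sum>i\<le>d. ((-1)^i * (a gchoose i)) * ((-1)^(d-i) * (b gchoose (d - i)))) = (-1)^d * ((a + b) gchoose d :: 'a::field_char_0)"
proof -
  have "(\<Sum>i\<le>d. ((-1)^i * (a gchoose i)) * ((-1)^(d-i) * (b gchoose (d - i)))) = (\<Sum>i\<le>d. (-1)^d * ((a gchoose i) * (b gchoose (d - i))))"
    by (intro sum.cong refl) (simp add: sgn_split[symmetric] algebra_simps)
  then show ?thesis by (simp add: vdm sum_distrib_left[symmetric])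
qed

lemma poly_ffp_gch: "poly (ffp a m) y = fact m * ((y + a) gchoose m :: 'a::field_char_0)"
  by (simp add: poly_ffp ffs_gchoose)
lemma poly_rfp_gch: "poly (rfp a m) y = (-1)^m * fact m * ((- (y + a)) gchoose m :: 'a::field_char_0)"
  by (simp add: poly_rfp poch_gchoose)

lemma poly_sum: "poly (sum f A) y = (\<Sum>i\<in>A. poly (f i) y)"
  by (induction A rule: infinite_finite_induct) simp_all

lemma P1: "pcompose (smult ((-1)^d / fact d) (ffp 0 d)) [:c, 1:]
   = (\<Sum>i\<le>d. [:(-1)^i * (c gchoose i):] * smult ((-1)^(d-i) / fact (d-i)) (ffp 0 (d-i)) :: 'a::field_char_0 poly)"
proof (rule poly_ext)
  fix y
  have "poly (\<Sum>i\<le>d. [:(-1)^i * (c gchoose i):] * smult ((-1)^(d-i) / fact (d-i)) (ffp 0 (d-i))) y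
      = (\<Sum>i\<le>d. ((-1)^i * (c gchoose i)) * ((-1)^(d-i) * (y gchoose (d - i))))"
    by (simp add: poly_sum poly_ffp_gch mult_ac)
  also have "\<dots> = (-1)^d * ((c + y) gchoose d)" by (rule vdm_sgn)
  also have "\<dots> = poly (pcompose (smult ((-1)^d / fact d) (ffp 0 d)) [:c, 1:]) y"
    by (simp add: poly_pcompose poly_ffp_gch algebra_simps)
  finally show "poly (pcompose (smult ((-1)^d / fact d) (ffp 0 d)) [:c, 1:]) y = poly (\<Sum>i\<le>d. [:(-1)^i * (c gchoose i):] * smult ((-1)^(d-i) / fact (d-i)) (ffp 0 (d-i))) y"
    by simp
qed

lemma P2: "(\<Sum>s\<le>d. smult (1 / fact s) (rfp 0 s) * smult ((-1)^(d-s) / fact (d-s)) (ffp 0 (d-s)))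
   = (if d = 0 then 1 else (0::'a::field_char_0 poly))"
proof (rule poly_ext)
  fix y :: 'a
  have "poly (\<Sum>s\<le>d. smult (1 / fact s) (rfp 0 s) * smult ((-1)^(d-s) / fact (d-s)) (ffp 0 (d-s))) y
      = (\<Sum>s\<le>d. ((-1)^s * ((-y) gchoose s)) * ((-1)^(d-s) * (y gchoose (d - s))))"
    by (simp add: poly_sum poly_ffp_gch poly_rfp_gch mult_ac)
  also have "\<dots> = (-1)^d * ((-y + y) gchoose d)" by (rule vdm_sgn)
  finally show "poly (\<Sum>s\<le>d. smult (1 / fact s) (rfp 0 s) * smult ((-1)^(d-s) / fact (d-s)) (ffp 0 (d-s))) y
      = poly (if d = 0 then 1 else 0) y"
    by (simp add: gbinomial_0_left)
qed

lemma P4: "(\<Sum>i\<le>u. smult ((-1)^i / fact i) (ffp 0 i) * smult (1 / fact (u-i)) (rfp (of_nat m) (u-i)))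
   = [:(-1)^u * ((- of_nat m) gchoose u) :: 'a::field_char_0:]"
proof (rule poly_ext)
  fix y :: 'a
  have "poly (\<Sum>i\<le>u. smult ((-1)^i / fact i) (ffp 0 i) * smult (1 / fact (u-i)) (rfp (of_nat m) (u-i))) y
      = (\<Sum>i\<le>u. ((-1)^i * (y gchoose i)) * ((-1)^(u-i) * ((- (y + of_nat m)) gchoose (u - i))))"
    by (simp add: poly_sum poly_ffp_gch poly_rfp_gch mult_ac)
  also have "\<dots> = (-1)^u * ((y + - (y + of_nat m)) gchoose u)" by (rule vdm_sgn)
  finally show "poly (\<Sum>i\<le>u. smult ((-1)^i / fact i) (ffp 0 i) * smult (1 / fact (u-i)) (rfp (of_nat m) (u-i))) y
      = poly [:(-1)^u * ((- of_nat m) gchoose u):] y"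
    by simp
qed

lemma P6: "(\<Sum>s\<le>u. smult ((-1)^s / fact s) (ffp 0 s) * [:(-1)^(u-s) * (c gchoose (u-s)):])
   = smult ((-1)^u / fact u) (ffp c u :: 'a::field_char_0 poly)"
proof (rule poly_ext)
  fix y :: 'a
  have "poly (\<Sum>s\<le>u. smult ((-1)^s / fact s) (ffp 0 s) * [:(-1)^(u-s) * (c gchoose (u-s)):]) y
      = (\<Sum>s\<le>u. ((-1)^s * (y gchoose s)) * ((-1)^(u-s) * (c gchoose (u - s))))"
    by (simp add: poly_sum poly_ffp_gch mult_ac)
  also have "\<dots> = (-1)^u * ((y + c) gchoose u)" by (rule vdm_sgn)
  finally show "poly (\<Sum>s\<le>u. smult ((-1)^s / fact s) (ffp 0 s) * [:(-1)^(u-s) * (c gchoose (u-s)):]) y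
      = poly (smult ((-1)^u / fact u) (ffp c u)) y"
    by (simp add: poly_ffp_gch)
qed

lemma alt_fact_sum: "(\<Sum>s\<le>d. (-1)^s / (fact s * fact (d - s))) = (if d = 0 then 1 else (0::'a::field_char_0))"
proof (cases "d = 0")
  case True then show ?thesis by simp
next
  case False
  have "(\<Sum>s\<le>d. (-1)^s / (fact s * fact (d - s))) = (\<Sum>s\<le>d. (-1)^s * of_nat (d choose s)) / (fact d :: 'a)"
    unfolding sum_divide_distrib
  proof (intro sum.cong refl)
    fix s assume "s \<in> {..d}"
    then have "fact s * fact (d - s) * of_nat (d choose s) = (fact d :: 'a)"
      using binomial_fact_lemma[of s d] by (metis of_nat_fact of_nat_mult atMost_iff)
    then show "(-1)^s / (fact s * fact (d - s)) = (-1)^s * of_nat (d choose s) / (fact d :: 'a)"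
      by (auto simp: field_simps)
  qed
  also have "\<dots> = 0" using False by (simp add: choose_alternating_sum)
  finally show ?thesis using False by simp
qed

lemma PWV: "(\<Sum>s\<le>d. smult ((-1)^s / fact s) (ffp 0 s) * pcompose (smult (1 / fact (d-s)) (ffp 0 (d-s))) [:- of_nat s, 1:])
   = (if d = 0 then 1 else (0::'a::field_char_0 poly))"
proof -
  have "(\<Sum>s\<le>d. smult ((-1)^s / fact s) (ffp 0 s) * pcompose (smult (1 / fact (d-s)) (ffp 0 (d-s))) [:- of_nat s, 1:])
     = (\<Sum>s\<le>d. smult ((-1)^s / (fact s * fact (d - s))) (ffp (0::'a) d))"
  proof (intro sum.cong refl)
    fix s assume "s \<in> {..d}"
    then have "ffp 0 s * ffp (0 - of_nat s) (d - s) = ffp (0::'a) d" using ffp_split[of 0 s "d-s"] by simp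
    then show "smult ((-1)^s / fact s) (ffp 0 s) * pcompose (smult (1 / fact (d-s)) (ffp 0 (d-s))) [:- of_nat s, 1:]
       = smult ((-1)^s / (fact s * fact (d - s))) (ffp (0::'a) d)"
      by (simp add: pcompose_smult ffp_shift mult.commute)
  qed
  also have "\<dots> = smult (\<Sum>s\<le>d. (-1)^s / (fact s * fact (d - s))) (ffp 0 d)"
    by (simp add: smult_sum)
  finally show ?thesis by (simp add: alt_fact_sum ffp_def)
qed

lemma qc0_fact: "m \<le> d \<Longrightarrow> of_int (qc d 0 m) / fact d = ((-1)^m / fact (d - m) :: 'a::field_char_0)"
proof -
  assume md: "m \<le> d"
  have "fact m * fact (d - m) * of_nat (d choose m) = (fact d :: 'a)"
    using binomial_fact_lemma[OF md] by (metis of_nat_fact of_nat_mult)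
  moreover have "pochhammer (Suc 0) m = (fact m :: nat)" using pochhammer_fact[of m, where 'a=nat] by (simp add: One_nat_def)
  ultimately show ?thesis
    by (simp add: qc_def field_simps)
qed


lemma pcompose_lin_lin: "pcompose [:b, 1:] [:a, 1:] = [:b + a, 1::'a::comm_ring_1:]"
  by (simp add: pcompose_pCons)

lemma epow_comm:
  fixes h e :: "('g,'a::comm_ring_1) falg"
  assumes I: "isideal I" and r: "cg I (e * h) ((h + sc b) * e)"
  shows "cg I (e ^ n * evp h p) (evp h (pcompose p [:of_nat n * b, 1:]) * e ^ n)"
proof -
  interpret qr I by (rule qr.intro[OF I])
  show ?thesis
  proof (induction n arbitrary: p)
    case 0 then show ?case by simp
  next
    case (Suc n)
    have "e ^ Suc n * evp h p = e ^ n * (e * evp h p)" by (simp add: mult.assoc power_Suc2 del: power_Suc)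
    also have "cg I \<dots> (e ^ n * (evp h (pcompose p [:b, 1:]) * e))"
      by (rule cg_lmult, rule evp_comm_left[OF I r])
    also have "e ^ n * (evp h (pcompose p [:b, 1:]) * e) = (e ^ n * evp h (pcompose p [:b, 1:])) * e"
      by (simp add: mult.assoc)
    also have "cg I \<dots> ((evp h (pcompose (pcompose p [:b, 1:]) [:of_nat n * b, 1:]) * e ^ n) * e)"
      by (rule cg_rmult, rule Suc.IH)
    also have "(evp h (pcompose (pcompose p [:b, 1:]) [:of_nat n * b, 1:]) * e ^ n) * e
       = evp h (pcompose p [:of_nat (Suc n) * b, 1:]) * e ^ Suc n"
      by (simp add: pcompose_assoc[symmetric] pcompose_lin_lin mult.assoc power_Suc2[symmetric] algebra_simps)
    finally show ?case .
  qed
qed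

lemma N_mult:
  fixes h e :: "('g,'a::comm_ring_1) falg"
  assumes I: "isideal I" and r: "cg I (e * h) ((h + sc b) * e)"
  shows "cg I ((evp h p * e ^ n) * (evp h q * e ^ m)) (evp h (p * pcompose q [:of_nat n * b, 1:]) * e ^ (n + m))"
proof -
  interpret qr I by (rule qr.intro[OF I])
  have "(evp h p * e ^ n) * (evp h q * e ^ m) = evp h p * (e ^ n * evp h q) * e ^ m"
    by (simp add: mult.assoc)
  also have "cg I \<dots> (evp h p * (evp h (pcompose q [:of_nat n * b, 1:]) * e ^ n) * e ^ m)"
    by (intro cg_rmult cg_lmult epow_comm[OF I r])
  also have "evp h p * (evp h (pcompose q [:of_nat n * b, 1:]) * e ^ n) * e ^ m
     = evp h (p * pcompose q [:of_nat n * b, 1:]) * e ^ (n + m)"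
    by (simp add: evp_mult mult.assoc power_add)
  finally show ?thesis .
qed

lemma evp_ofint_pull: "evp h p * (of_int k * y) = evp h (smult (of_int k) p) * y"
proof -
  have "evp h p * (of_int k * y) = (evp h p * of_int k) * y" by (simp add: mult.assoc)
  also have "evp h p * of_int k = of_int k * evp h p" by (rule mult_of_int_commute[symmetric])
  finally show ?thesis by (simp add: evp_smult sc_of_int)
qed


definition Vs :: "('g,'a::field_char_0) falg \<Rightarrow> ('g,'a) falg \<Rightarrow> ('g,'a) falg fps" where
  "Vs h e = Abs_fps (\<lambda>r. evp h (smult (1 / fact r) (ffp 0 r)) * e ^ r)"
definition Ws :: "('g,'a::field_char_0) falg \<Rightarrow> ('g,'a) falg \<Rightarrow> ('g,'a) falg fps" where
  "Ws h e = Abs_fps (\<lambda>s. evp h (smult ((-1)^s / fact s) (ffp 0 s)) * e ^ s)"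
definition Pw :: "('g,'a::field_char_0) falg \<Rightarrow> ('g,'a) falg \<Rightarrow> 'a \<Rightarrow> ('g,'a) falg fps" where
  "Pw h e c = Abs_fps (\<lambda>u. evp h [:(-1)^u * (c gchoose u):] * e ^ u)"
definition Wc :: "('g,'a::field_char_0) falg \<Rightarrow> ('g,'a) falg \<Rightarrow> 'a \<Rightarrow> ('g,'a) falg fps" where
  "Wc h e c = Abs_fps (\<lambda>u. evp h (smult ((-1)^u / fact u) (ffp c u)) * e ^ u)"
definition Zs :: "('g,'a::field_char_0) falg \<Rightarrow> (nat \<Rightarrow> ('g,'a) falg) \<Rightarrow> ('g,'a) falg fps" where
  "Zs h Q = tsum (\<lambda>m. fps_const (Q m * evp h (rfp 1 m)))"

lemma fps_nth_mult_atMost: "fps_nth (f * g) n = (\<Sum>i\<le>n. fps_nth f i * fps_nth g (n - i))"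
  by (simp add: fps_mult_nth atLeast0AtMost)

lemma WV:
  fixes h e :: "('g,'a::field_char_0) falg"
  assumes I: "isideal I" and Re: "cg I (e * h) ((h + sc (-1)) * e)"
  shows "cg (psI I) (Ws h e * Vs h e) 1"
  unfolding cg_psI
proof
  fix d
  interpret qr I by (rule qr.intro[OF I])
  have "fps_nth (Ws h e * Vs h e) d = (\<Sum>s\<le>d. (evp h (smult ((-1)^s / fact s) (ffp 0 s)) * e ^ s) *
       (evp h (smult (1 / fact (d-s)) (ffp 0 (d-s))) * e ^ (d-s)))"
    by (simp add: fps_nth_mult_atMost Ws_def Vs_def)
  also have "cg I \<dots> (\<Sum>s\<le>d. evp h (smult ((-1)^s / fact s) (ffp 0 s) * pcompose (smult (1 / fact (d-s)) (ffp 0 (d-s))) [:of_nat s * -1, 1:]) * e ^ (s + (d - s)))"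
    by (intro cg_sum N_mult[OF I Re])
  also have "\<dots> = evp h (\<Sum>s\<le>d. smult ((-1)^s / fact s) (ffp 0 s) * pcompose (smult (1 / fact (d-s)) (ffp 0 (d-s))) [:- of_nat s, 1:]) * e ^ d"
    by (simp add: evp_sum sum_distrib_right)
  also have "\<dots> = fps_nth 1 d" unfolding PWV by simp
  finally show "cg I (fps_nth (Ws h e * Vs h e) d) (fps_nth 1 d)" .
qed

lemma WPw:
  fixes h e :: "('g,'a::field_char_0) falg"
  assumes I: "isideal I" and Re: "cg I (e * h) ((h + sc (-1)) * e)"
  shows "cg (psI I) (Ws h e * Pw h e c) (Wc h e c)"
  unfolding cg_psI
proof
  fix u
  interpret qr I by (rule qr.intro[OF I])
  have "fps_nth (Ws h e * Pw h e c) u = (\<Sum>s\<le>u. (evp h (smult ((-1)^s / fact s) (ffp 0 s)) * e ^ s) *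
       (evp h [:(-1)^(u-s) * (c gchoose (u-s)):] * e ^ (u-s)))"
    by (simp add: fps_nth_mult_atMost Ws_def Pw_def)
  also have "cg I \<dots> (\<Sum>s\<le>u. evp h (smult ((-1)^s / fact s) (ffp 0 s) * pcompose [:(-1)^(u-s) * (c gchoose (u-s)):] [:of_nat s * -1, 1:]) * e ^ (s + (u - s)))"
    by (intro cg_sum N_mult[OF I Re])
  also have "\<dots> = evp h (\<Sum>s\<le>u. smult ((-1)^s / fact s) (ffp 0 s) * [:(-1)^(u-s) * (c gchoose (u-s)):]) * e ^ u"
    by (simp add: evp_sum sum_distrib_right)
  also have "\<dots> = fps_nth (Wc h e c) u" unfolding P6 by (simp add: Wc_def)
  finally show "cg I (fps_nth (Ws h e * Pw h e c) u) (fps_nth (Wc h e c) u)" .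
qed

lemma Pxw: "m \<le> d \<Longrightarrow> smult (of_int (qc d 0 m)) (pcompose (smult ((-1)^d / fact d) (ffp 0 d)) [:-c, 1:])
   = smult ((-1)^(d-m) / fact (d-m)) (ffp (-c) (d-m)) * ffp (-c - of_nat (d-m)) m" for c :: "'a::field_char_0"
proof -
  assume md: "m \<le> d"
  have sp: "ffp (-c) (d-m) * ffp (-c - of_nat (d-m)) m = ffp (-c) d"
    using ffp_split[of "-c" "d-m" m] md by simp
  have "of_int (qc d 0 m) * ((-1)^d / fact d) = (of_int (qc d 0 m) / fact d) * ((-1)^d :: 'a)" by simp
  also have "\<dots> = (-1)^m / fact (d - m) * (-1)^d" by (simp only: qc0_fact[OF md])
  also have "\<dots> = (-1)^(d-m) / fact (d-m)"
  proof -
    have d: "(-1::'a)^d = (-1)^(d-m) * (-1)^m" using md by (metis le_add_diff_inverse2 power_add)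
    have mm: "(-1::'a)^m * (-1)^m = 1" by (simp flip: power_mult_distrib)
    have "(-1::'a)^m * (-1)^d = (-1)^(d-m) * ((-1)^m * (-1)^m)" unfolding d by (simp only: mult_ac)
    then have "(-1::'a)^m * (-1)^d = (-1)^(d-m)" by (simp only: mm mult_1_right)
    then show ?thesis by (simp add: field_simps)
  qed
  finally have sc: "of_int (qc d 0 m) * ((-1)^d / fact d) = ((-1)^(d-m) / fact (d-m) :: 'a)" .
  have sc': "of_int (qc d 0 m) * (-1) ^ d / fact d = ((-1)^(d-m) / fact (d-m) :: 'a)"
    using sc by simp
  show ?thesis
    by (simp add: pcompose_smult ffp_shift mult.assoc sp sc')
qed


lemma xW_term:
  fixes h e :: "('g,'a::field_char_0) falg" and Q :: "nat \<Rightarrow> ('g,'a) falg" and c :: 'a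
  assumes I: "isideal I" and Re: "cg I (e * h) ((h + sc (-1)) * e)"
    and RQ: "\<And>m. cg I (h * Q m) (Q m * (h + sc (c + of_nat m)))"
    and md: "m \<le> d"
  shows "cg I (evp h (smult (of_int (qc d 0 m)) (pcompose (smult ((-1)^d / fact d) (ffp 0 d)) [:-c, 1:])) * (e ^ (d - m) * Q m))
              (fps_nth (Wc h e (-c)) (d - m) * (Q m * evp h (rfp 1 m)))"
proof -
  interpret qr I by (rule qr.intro[OF I])
  define u where "u = d - m"
  define A where "A = smult ((-1)^u / fact u) (ffp (-c) u)"
  define B where "B = ffp (-c - of_nat u) m"
  have "evp h (smult (of_int (qc d 0 m)) (pcompose (smult ((-1)^d / fact d) (ffp 0 d)) [:-c, 1:])) * (e ^ u * Q m)
      = evp h A * ((evp h B * e ^ u) * Q m)"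
    unfolding A_def B_def u_def Pxw[OF md] by (simp add: evp_mult evp_smult mult.assoc)
  also have "cg I \<dots> (evp h A * ((e ^ u * evp h (ffp (-c) m)) * Q m))"
  proof -
    have "cg I (e ^ u * evp h (ffp (-c) m)) (evp h (pcompose (ffp (-c) m) [:of_nat u * -1, 1:]) * e ^ u)"
      by (rule epow_comm[OF I Re])
    also have "pcompose (ffp (-c) m) [:of_nat u * -1, 1:] = B"
      by (simp add: B_def ffp_shift)
    finally have "cg I (evp h B * e ^ u) (e ^ u * evp h (ffp (-c) m))" by (rule cg_sym)
    then show ?thesis by (intro cg_lmult cg_rmult)
  qed
  also have "evp h A * ((e ^ u * evp h (ffp (-c) m)) * Q m) = (evp h A * e ^ u) * (evp h (ffp (-c) m) * Q m)"
    by (simp add: mult.assoc)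
  also have "cg I \<dots> ((evp h A * e ^ u) * (Q m * evp h (pcompose (ffp (-c) m) [:c + of_nat m, 1:])))"
    by (intro cg_lmult evp_comm_right[OF I RQ])
  also have "pcompose (ffp (-c) m) [:c + of_nat m, 1:] = rfp 1 m"
    by (simp add: ffp_shift ffp_rfp)
  also have "evp h A * e ^ u = fps_nth (Wc h e (-c)) u"
    by (simp add: Wc_def A_def)
  finally show ?thesis unfolding u_def .
qed

lemma xW:
  fixes h e x :: "('g,'a::field_char_0) falg" and Q :: "nat \<Rightarrow> ('g,'a) falg" and c :: 'a
  assumes I: "isideal I" and Re: "cg I (e * h) ((h + sc (-1)) * e)"
    and Rx: "cg I (x * h) ((h + sc (-c)) * x)"
    and RQ: "\<And>m. cg I (h * Q m) (Q m * (h + sc (c + of_nat m)))"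
    and RQe: "\<And>m. cg I (Q m * e) (e * Q m - of_nat (Suc m) * Q (Suc m))"
    and Q0: "Q 0 = x"
  shows "cg (psI I) (fps_const x * Ws h e) (Wc h e (-c) * Zs h Q)"
  unfolding cg_psI
proof
  fix d
  interpret qr I by (rule qr.intro[OF I])
  define wd where "wd = smult ((-1)^d / fact d) (ffp (0::'a) d)"
  define w' where "w' = pcompose wd [:-c, 1:]"
  have "fps_nth (fps_const x * Ws h e) d = (x * evp h wd) * e ^ d"
    by (simp add: Ws_def wd_def mult.assoc)
  also have "cg I \<dots> ((evp h w' * x) * e ^ d)"
    unfolding w'_def by (intro cg_rmult) (rule evp_comm_left[OF I Rx])
  also have "(evp h w' * x) * e ^ d = evp h w' * (Q 0 * e ^ d)" by (simp add: mult.assoc Q0)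
  also have "cg I \<dots> (evp h w' * (\<Sum>m\<le>d. of_int (qc d 0 m) * (e ^ (d - m) * Q (0 + m))))"
    by (intro cg_lmult Qe_pow RQe)
  also have "\<dots> = (\<Sum>m\<le>d. evp h (smult (of_int (qc d 0 m)) w') * (e ^ (d - m) * Q m))"
    by (simp add: sum_distrib_left evp_ofint_pull)
  also have "cg I \<dots> (\<Sum>m\<le>d. fps_nth (Wc h e (-c)) (d - m) * (Q m * evp h (rfp 1 m)))"
    unfolding w'_def wd_def by (intro cg_sum xW_term[OF I Re RQ]) simp
  also have "\<dots> = fps_nth (Wc h e (-c) * Zs h Q) d"
    by (simp add: Zs_def tsum_mult_left tsum_nth)
  finally show "cg I (fps_nth (fps_const x * Ws h e) d) (fps_nth (Wc h e (-c) * Zs h Q) d)" .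
qed

lemma antipode_core:
  fixes h e x :: "('g,'a::field_char_0) falg" and Q :: "nat \<Rightarrow> ('g,'a) falg" and c :: 'a
  assumes Iid: "isideal I" and Re: "cg I (e * h) ((h + sc (-1)) * e)"
    and Rx: "cg I (x * h) ((h + sc (-c)) * x)"
    and RQ: "\<And>m. cg I (h * Q m) (Q m * (h + sc (c + of_nat m)))"
    and RQe: "\<And>m. cg I (Q m * e) (e * Q m - of_nat (Suc m) * Q (Suc m))"
    and Q0: "Q 0 = x"
    and Vinv: "Vs h e * Vi = 1"
  shows "cg (psI I) (Vs h e * fps_const (- x) * Vi) (- (Pw h e (-c) * Zs h Q))"
proof -
  interpret qr "psI I" by (rule qr.intro[OF psI_ideal[OF Iid]])
  let ?V = "Vs h e" and ?W = "Ws h e" and ?X = "fps_const x" and ?P = "Pw h e (-c)" and ?Z = "Zs h Q"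
  have wv: "cg (psI I) (?W * ?V) 1" by (rule WV[OF Iid Re])
  have "?W = ?W * (?V * Vi)" by (simp add: Vinv)
  also have "\<dots> = (?W * ?V) * Vi" by (simp add: mult.assoc)
  also have "cg (psI I) \<dots> (1 * Vi)" by (intro cg_rmult wv)
  finally have w: "cg (psI I) ?W Vi" by simp
  have vw: "cg (psI I) (?V * ?W) 1"
    using cg_lmult[OF w, of ?V] by (simp add: Vinv)
  have "?V * ?X = ?V * ?X * 1" by simp
  also have "cg (psI I) \<dots> (?V * ?X * (?W * ?V))" by (intro cg_lmult cg_sym[OF wv])
  also have "?V * ?X * (?W * ?V) = ?V * (?X * ?W) * ?V" by (simp add: mult.assoc)
  also have "cg (psI I) \<dots> (?V * (Wc h e (-c) * ?Z) * ?V)"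
    by (intro cg_lmult cg_rmult xW[OF Iid Re Rx RQ RQe Q0])
  also have "cg (psI I) \<dots> (?V * ((?W * ?P) * ?Z) * ?V)"
    by (intro cg_lmult cg_rmult cg_sym[OF WPw[OF Iid Re]])
  also have "?V * ((?W * ?P) * ?Z) * ?V = (?V * ?W) * (?P * ?Z * ?V)" by (simp add: mult.assoc)
  also have "cg (psI I) \<dots> (1 * (?P * ?Z * ?V))" by (intro cg_rmult vw)
  finally have vx: "cg (psI I) (?V * ?X) (?P * ?Z * ?V)" by simp
  have "?V * fps_const (- x) * Vi = - (?V * ?X * Vi)" by (simp flip: fps_const_neg)
  also have "cg (psI I) \<dots> (- (?P * ?Z * ?V * Vi))" by (intro cg_uminus cg_rmult vx)
  also have "- (?P * ?Z * ?V * Vi) = - (?P * ?Z)" by (simp add: mult.assoc Vinv)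
  finally show ?thesis .
qed


definition Fs :: "('g,'a::field_char_0) falg \<Rightarrow> ('g,'a) falg \<Rightarrow> ('g,'a) falg fps" where
  "Fs h e = Abs_fps (\<lambda>r. evp h (smult ((-1)^r / fact r) (ffp 0 r)) * e ^ r)"
definition Gm :: "('g,'a::field_char_0) falg \<Rightarrow> ('g,'a) falg \<Rightarrow> nat \<Rightarrow> ('g,'a) falg fps" where
  "Gm h e m = Abs_fps (\<lambda>s. evp h (smult (1 / fact s) (rfp (of_nat m) s)) * e ^ s)"
definition R2s :: "('g,'a::field_char_0) falg \<Rightarrow> ('g,'a) falg \<Rightarrow> (nat \<Rightarrow> ('g,'a) falg) \<Rightarrow> ('g,'a) falg fps" where
  "R2s h e Q = tsum (\<lambda>m. fps_const (evp h (smult ((-1)^m) (rfp 0 m))) * Pw h e (- of_nat m) * fps_const (Q m))"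

lemma N_mult0:
  fixes h e :: "('g,'a::comm_ring_1) falg"
  assumes I: "isideal I" and r: "cg I (e * h) (h * e)"
  shows "cg I ((evp h p * e ^ n) * (evp h q * e ^ m)) (evp h (p * q) * e ^ (n + m))"
  using N_mult[OF I, of e h 0 p n q m] r by simp

lemma FX:
  fixes H E X :: "('g,'a::field_char_0) falg" and c :: 'a
  assumes I: "isideal I" and RHE: "cg I (E * H) (H * E)"
    and RX: "cg I (H * X) (X * (H + sc c))" and RXE: "cg I (E * X) (X * E)"
  shows "cg (psI I) (Fs H E * fps_const X) (fps_const X * Pw H E c * Fs H E)"
  unfolding cg_psI
proof
  fix d
  interpret qr I by (rule qr.intro[OF I])
  define fd where "fd = smult ((-1)^d / fact d) (ffp (0::'a) d)"
  have "fps_nth (Fs H E * fps_const X) d = evp H fd * (E ^ d * X)"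
    by (simp add: Fs_def fd_def mult.assoc)
  also have "cg I \<dots> (evp H fd * (X * E ^ d))" by (intro cg_lmult cg_power_comm RXE)
  also have "evp H fd * (X * E ^ d) = (evp H fd * X) * E ^ d" by (simp add: mult.assoc)
  also have "cg I \<dots> ((X * evp H (pcompose fd [:c, 1:])) * E ^ d)"
    by (intro cg_rmult evp_comm_right[OF I RX])
  also have "(X * evp H (pcompose fd [:c, 1:])) * E ^ d
     = X * (evp H (\<Sum>i\<le>d. [:(-1)^i * (c gchoose i):] * smult ((-1)^(d-i) / fact (d-i)) (ffp 0 (d-i))) * E ^ d)"
    by (simp add: fd_def P1 mult.assoc)
  also have "\<dots> = X * (\<Sum>i\<le>d. evp H ([:(-1)^i * (c gchoose i):] * smult ((-1)^(d-i) / fact (d-i)) (ffp 0 (d-i))) * E ^ (i + (d - i)))"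
    by (simp add: evp_sum sum_distrib_right)
  also have "cg I \<dots> (X * (\<Sum>i\<le>d. (evp H [:(-1)^i * (c gchoose i):] * E ^ i) * (evp H (smult ((-1)^(d-i) / fact (d-i)) (ffp 0 (d-i))) * E ^ (d - i))))"
    by (intro cg_lmult cg_sum cg_sym[OF N_mult0[OF I RHE]])
  also have "\<dots> = fps_nth (fps_const X * (Pw H E c * Fs H E)) d"
    by (subst fps_mult_left_const_nth) (simp add: fps_nth_mult_atMost Pw_def Fs_def mult.assoc)
  also have "\<dots> = fps_nth (fps_const X * Pw H E c * Fs H E) d" by (simp only: mult.assoc)
  finally show "cg I (fps_nth (Fs H E * fps_const X) d) (fps_nth (fps_const X * Pw H E c * Fs H E) d)" .
qed

lemma GF:
  fixes H E :: "('g,'a::field_char_0) falg"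
  assumes I: "isideal I" and RHE: "cg I (E * H) (H * E)"
  shows "cg (psI I) (Gm H E 0 * Fs H E) 1"
  unfolding cg_psI
proof
  fix d
  interpret qr I by (rule qr.intro[OF I])
  have "fps_nth (Gm H E 0 * Fs H E) d = (\<Sum>s\<le>d. (evp H (smult (1 / fact s) (rfp 0 s)) * E ^ s) *
       (evp H (smult ((-1)^(d-s) / fact (d-s)) (ffp 0 (d-s))) * E ^ (d-s)))"
    by (simp add: fps_nth_mult_atMost Gm_def Fs_def)
  also have "cg I \<dots> (\<Sum>s\<le>d. evp H (smult (1 / fact s) (rfp 0 s) * smult ((-1)^(d-s) / fact (d-s)) (ffp 0 (d-s))) * E ^ (s + (d - s)))"
    by (intro cg_sum N_mult0[OF I RHE])
  also have "\<dots> = evp H (\<Sum>s\<le>d. smult (1 / fact s) (rfp 0 s) * smult ((-1)^(d-s) / fact (d-s)) (ffp 0 (d-s))) * E ^ d"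
    by (simp add: evp_sum sum_distrib_right)
  also have "\<dots> = fps_nth 1 d" unfolding P2 by simp
  finally show "cg I (fps_nth (Gm H E 0 * Fs H E) d) (fps_nth 1 d)" .
qed

lemma FGm:
  fixes H E :: "('g,'a::field_char_0) falg"
  assumes I: "isideal I" and RHE: "cg I (E * H) (H * E)"
  shows "cg (psI I) (Fs H E * Gm H E m) (Pw H E (- of_nat m))"
  unfolding cg_psI
proof
  fix u
  interpret qr I by (rule qr.intro[OF I])
  have "fps_nth (Fs H E * Gm H E m) u = (\<Sum>i\<le>u. (evp H (smult ((-1)^i / fact i) (ffp 0 i)) * E ^ i) *
       (evp H (smult (1 / fact (u-i)) (rfp (of_nat m) (u-i))) * E ^ (u-i)))"
    by (simp add: fps_nth_mult_atMost Gm_def Fs_def)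
  also have "cg I \<dots> (\<Sum>i\<le>u. evp H (smult ((-1)^i / fact i) (ffp 0 i) * smult (1 / fact (u-i)) (rfp (of_nat m) (u-i))) * E ^ (i + (u - i)))"
    by (intro cg_sum N_mult0[OF I RHE])
  also have "\<dots> = evp H (\<Sum>i\<le>u. smult ((-1)^i / fact i) (ffp 0 i) * smult (1 / fact (u-i)) (rfp (of_nat m) (u-i))) * E ^ u"
    by (simp add: evp_sum sum_distrib_right)
  also have "\<dots> = fps_nth (Pw H E (- of_nat m)) u" unfolding P4 by (simp add: Pw_def)
  finally show "cg I (fps_nth (Fs H E * Gm H E m) u) (fps_nth (Pw H E (- of_nat m)) u)" .
qed

lemma Fconst:
  fixes H E :: "('g,'a::field_char_0) falg"
  assumes I: "isideal I" and RHE: "cg I (E * H) (H * E)"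
  shows "cg (psI I) (Fs H E * fps_const (evp H p)) (fps_const (evp H p) * Fs H E)"
  unfolding cg_psI
proof
  fix r
  interpret qr I by (rule qr.intro[OF I])
  define fr where "fr = smult ((-1)^r / fact r) (ffp (0::'a) r)"
  have "fps_nth (Fs H E * fps_const (evp H p)) r = evp H fr * (E ^ r * evp H p)"
    by (simp add: Fs_def fr_def mult.assoc)
  also have "cg I \<dots> (evp H fr * (evp H (pcompose p [:of_nat r * 0, 1:]) * E ^ r))"
    using RHE by (intro cg_lmult epow_comm[OF I]) simp
  also have "evp H fr * (evp H (pcompose p [:of_nat r * 0, 1:]) * E ^ r) = evp H p * (evp H fr * E ^ r)"
    by (simp add: mult.assoc[symmetric] evp_mult[symmetric] mult.commute)
  also have "\<dots> = fps_nth (fps_const (evp H p) * Fs H E) r"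
    by (simp add: Fs_def fr_def)
  finally show "cg I (fps_nth (Fs H E * fps_const (evp H p)) r) (fps_nth (fps_const (evp H p) * Fs H E) r)" .
qed

lemma Pyg: "m \<le> d \<Longrightarrow> smult (of_int (qc d 0 m)) (smult (1 / fact d) (rfp 0 d))
   = smult ((-1)^m) (rfp 0 m) * smult (1 / fact (d-m)) (rfp (of_nat m) (d-m) :: 'a::field_char_0 poly)"
proof -
  assume md: "m \<le> d"
  have sp: "rfp 0 m * rfp (of_nat m) (d - m) = rfp (0::'a) d"
    using rfp_split[of m "d-m"] md by simp
  have sc: "of_int (qc d 0 m) * (1 / fact d) = ((-1)^m * (1 / fact (d-m)) :: 'a)"
    using qc0_fact[OF md] by simp
  show ?thesis
    by (simp add: mult_smult_left mult_smult_right sp qc0_fact[OF md])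
qed

lemma YG:
  fixes H E :: "('g,'a::field_char_0) falg" and Q :: "nat \<Rightarrow> ('g,'a) falg"
  assumes I: "isideal I" and RQH: "\<And>m. cg I (H * Q m) (Q m * H)"
    and RQe: "\<And>m. cg I (Q m * E) (E * Q m - of_nat (Suc m) * Q (Suc m))"
  shows "cg (psI I) (fps_const (Q 0) * Gm H E 0)
     (tsum (\<lambda>m. fps_const (evp H (smult ((-1)^m) (rfp 0 m))) * Gm H E m * fps_const (Q m)))"
  unfolding cg_psI
proof
  fix d
  interpret qr I by (rule qr.intro[OF I])
  define gd where "gd = smult (1 / fact d) (rfp (0::'a) d)"
  have RQH': "cg I (Q 0 * H) ((H + sc 0) * Q 0)" using cg_sym[OF RQH[of 0]] by simp
  have "fps_nth (fps_const (Q 0) * Gm H E 0) d = (Q 0 * evp H gd) * E ^ d"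
    by (simp add: Gm_def gd_def mult.assoc)
  also have "cg I \<dots> ((evp H (pcompose gd [:0, 1:]) * Q 0) * E ^ d)"
    by (intro cg_rmult evp_comm_left[OF I RQH'])
  also have "(evp H (pcompose gd [:0, 1:]) * Q 0) * E ^ d = evp H gd * (Q 0 * E ^ d)"
    by (simp add: mult.assoc)
  also have "cg I \<dots> (evp H gd * (\<Sum>m\<le>d. of_int (qc d 0 m) * (E ^ (d - m) * Q (0 + m))))"
    by (intro cg_lmult Qe_pow RQe)
  also have "\<dots> = (\<Sum>m\<le>d. evp H (smult (of_int (qc d 0 m)) gd) * (E ^ (d - m) * Q m))"
    by (simp add: sum_distrib_left evp_ofint_pull)
  also have "\<dots> = (\<Sum>m\<le>d. evp H (smult ((-1)^m) (rfp 0 m)) * (evp H (smult (1 / fact (d-m)) (rfp (of_nat m) (d-m))) * E ^ (d - m)) * Q m)"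
  proof (intro sum.cong refl)
    fix m assume "m \<in> {..d}"
    then have "smult (of_int (qc d 0 m)) gd = smult ((-1)^m) (rfp 0 m) * smult (1 / fact (d-m)) (rfp (of_nat m) (d-m))"
      unfolding gd_def by (intro Pyg) simp
    then show "evp H (smult (of_int (qc d 0 m)) gd) * (E ^ (d - m) * Q m) = evp H (smult ((-1)^m) (rfp 0 m)) * (evp H (smult (1 / fact (d-m)) (rfp (of_nat m) (d-m))) * E ^ (d - m)) * Q m"
      by (simp only: evp_mult mult.assoc)
  qed
  also have "\<dots> = fps_nth (tsum (\<lambda>m. fps_const (evp H (smult ((-1)^m) (rfp 0 m))) * Gm H E m * fps_const (Q m))) d"
    by (simp add: tsum_nth Gm_def)
  finally show "cg I (fps_nth (fps_const (Q 0) * Gm H E 0) d) (fps_nth (tsum (\<lambda>m. fps_const (evp H (smult ((-1)^m) (rfp 0 m))) * Gm H E m * fps_const (Q m))) d)" .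
qed


lemma coprod_core:
  fixes H E X :: "('g,'a::field_char_0) falg" and Q :: "nat \<Rightarrow> ('g,'a) falg" and c :: 'a
  assumes Iid: "isideal I" and RHE: "cg I (E * H) (H * E)"
    and RX: "cg I (H * X) (X * (H + sc c))" and RXE: "cg I (E * X) (X * E)"
    and RQH: "\<And>m. cg I (H * Q m) (Q m * H)"
    and RQe: "\<And>m. cg I (Q m * E) (E * Q m - of_nat (Suc m) * Q (Suc m))"
    and Finv: "Fs H E * Fi = 1"
  shows "cg (psI I) (Fs H E * fps_const (X + Q 0) * Fi) (fps_const X * Pw H E c + R2s H E Q)"
proof -
  interpret qr "psI I" by (rule qr.intro[OF psI_ideal[OF Iid]])
  let ?F = "Fs H E" and ?G = "Gm H E 0" and ?Y = "fps_const (Q 0)"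
  let ?A = "\<lambda>m. fps_const (evp H (smult ((-1)^m) (rfp 0 m)))"
  let ?T = "tsum (\<lambda>m. ?A m * Gm H E m * fps_const (Q m))"
  have gf: "cg (psI I) (?G * ?F) 1" by (rule GF[OF Iid RHE])
  have tm: "cg (psI I) (?F * (?A m * Gm H E m * fps_const (Q m))) (?A m * Pw H E (- of_nat m) * fps_const (Q m))" for m
  proof -
    have "?F * (?A m * Gm H E m * fps_const (Q m)) = (?F * ?A m) * Gm H E m * fps_const (Q m)"
      by (simp add: mult.assoc)
    also have "cg (psI I) \<dots> ((?A m * ?F) * Gm H E m * fps_const (Q m))"
      by (intro cg_rmult Fconst[OF Iid RHE])
    also have "(?A m * ?F) * Gm H E m * fps_const (Q m) = ?A m * (?F * Gm H E m) * fps_const (Q m)"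
      by (simp add: mult.assoc)
    also have "cg (psI I) \<dots> (?A m * Pw H E (- of_nat m) * fps_const (Q m))"
      by (intro cg_rmult cg_lmult FGm[OF Iid RHE])
    finally show ?thesis .
  qed
  have "?F * ?Y = ?F * ?Y * 1" by simp
  also have "cg (psI I) \<dots> (?F * ?Y * (?G * ?F))" by (intro cg_lmult cg_sym[OF gf])
  also have "?F * ?Y * (?G * ?F) = ?F * (?Y * ?G) * ?F" by (simp add: mult.assoc)
  also have "cg (psI I) \<dots> (?F * ?T * ?F)" by (intro cg_lmult cg_rmult YG[OF Iid RQH RQe])
  also have "?F * ?T = tsum (\<lambda>m. ?F * (?A m * Gm H E m * fps_const (Q m)))" by (rule tsum_mult_left)
  also have "cg (psI I) (tsum (\<lambda>m. ?F * (?A m * Gm H E m * fps_const (Q m))) * ?F) (R2s H E Q * ?F)"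
    unfolding R2s_def by (intro cg_rmult tsum_cg[OF tm Iid])
  finally have fy: "cg (psI I) (?F * ?Y) (R2s H E Q * ?F)" .
  have fx: "cg (psI I) (?F * fps_const X) (fps_const X * Pw H E c * ?F)" by (rule FX[OF Iid RHE RX RXE])
  have "?F * fps_const (X + Q 0) * Fi = (?F * fps_const X + ?F * ?Y) * Fi"
    by (simp add: distrib_left flip: fps_const_add)
  also have "cg (psI I) \<dots> ((fps_const X * Pw H E c * ?F + R2s H E Q * ?F) * Fi)"
    by (intro cg_rmult cg_add fx fy)
  also have "(fps_const X * Pw H E c * ?F + R2s H E Q * ?F) * Fi = fps_const X * Pw H E c + R2s H E Q"
  proof -
    have "(fps_const X * Pw H E c * ?F + R2s H E Q * ?F) * Fi = (fps_const X * Pw H E c + R2s H E Q) * (?F * Fi)"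
      by (simp only: distrib_right mult.assoc)
    then show ?thesis by (simp add: Finv)
  qed
  finally show ?thesis .
qed


lemma sum_sym_split:
  "(\<Sum>i\<in>{- int n..int n}. f i) = f 0 + (\<Sum>i\<in>{1..int n}. f i + f (- i))"
proof (induction n)
  case 0 then show ?case by simp
next
  case (Suc n)
  have s1: "{- int (Suc n)..int (Suc n)} = insert (- int (Suc n)) (insert (int (Suc n)) {- int n..int n})" by auto
  have s2: "{1..int (Suc n)} = insert (int (Suc n)) {1..int n}" by auto
  show ?case unfolding s1 s2 using Suc by (simp add: algebra_simps)
qed

lemma sum_eps: "a \<in> {- int n..int n} \<Longrightarrow> (\<Sum>i\<in>{- int n..int n}. eps a i) = 1"
  by (simp add: eps_def)

definition hv :: "int \<Rightarrow> int \<Rightarrow> int" where "hv k = (\<lambda>j. eps k j + eps (-k) j)"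
definition ev :: "int \<Rightarrow> int \<Rightarrow> int" where "ev k = (\<lambda>j. eps k j + eps 0 j)"

lemma Kb_h:
  assumes k: "1 \<le> k" "k \<le> int n"
  shows "(Kbracket n (hv k) \<beta> :: (int \<Rightarrow> int, 'a::comm_ring_1) falg) = sc (of_int (\<beta> k - \<beta> (-k))) * fa_gen \<beta>"
proof -
  have S: "(\<Sum>i\<in>{1..int n}. hv k i + hv k (-i)) = 2"
  proof -
    have "(\<Sum>i\<in>{1..int n}. hv k i + hv k (-i)) = (\<Sum>i\<in>{1..int n}. if i = k then 2 else 0)"
      by (rule sum.cong) (use k in \<open>auto simp: hv_def eps_def\<close>)
    then show ?thesis using k by simp
  qed
  have h0: "hv k 0 = 0" using k by (simp add: hv_def eps_def)
  have T: "(\<Sum>i\<in>{1..int n}. fa_smult (of_int (hv k (-i) * \<beta> i - hv k i * \<beta> (-i)))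
              (fa_gen (\<lambda>j. hv k j + \<beta> j - eps i j - eps (-i) j)) :: (int \<Rightarrow> int, 'a) falg)
         = (\<Sum>i\<in>{1..int n}. if i = k then sc (of_int (\<beta> k - \<beta> (-k))) * fa_gen \<beta> else 0)"
  proof (rule sum.cong[OF refl])
    fix i assume i: "i \<in> {1..int n}"
    show "fa_smult (of_int (hv k (-i) * \<beta> i - hv k i * \<beta> (-i))) (fa_gen (\<lambda>j. hv k j + \<beta> j - eps i j - eps (-i) j))
        = (if i = k then sc (of_int (\<beta> k - \<beta> (-k))) * fa_gen \<beta> else (0 :: (int \<Rightarrow> int, 'a) falg))"
    proof (cases "i = k")
      case True
      have "(\<lambda>j. hv k j + \<beta> j - eps i j - eps (-i) j) = \<beta>" using True by (auto simp: hv_def eps_def)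
      then show ?thesis using True k by (simp add: fa_smult_eq hv_def eps_def)
    next
      case False
      then show ?thesis using i k by (simp add: fa_smult_eq hv_def eps_def)
    qed
  qed
  show ?thesis using k unfolding Kbracket_def S h0 T by (simp add: fa_smult_eq)
qed

lemma Kb_e:
  assumes k: "1 \<le> k" "k \<le> int n"
  shows "(Kbracket n (ev k) \<beta> :: (int \<Rightarrow> int, 'a::comm_ring_1) falg)
     = sc (of_int ((\<Sum>i\<in>{1..int n}. \<beta> i + \<beta> (-i)) + \<beta> 0 - 2)) * fa_gen (\<lambda>j. \<beta> j + eps k j)
     + sc (of_int (- \<beta> (-k))) * fa_gen (\<lambda>j. \<beta> j + eps 0 j - eps (-k) j)"
proof -
  have S: "(\<Sum>i\<in>{1..int n}. ev k i + ev k (-i)) = 1"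
  proof -
    have "(\<Sum>i\<in>{1..int n}. ev k i + ev k (-i)) = (\<Sum>i\<in>{1..int n}. if i = k then 1 else 0)"
      by (rule sum.cong) (use k in \<open>auto simp: ev_def eps_def\<close>)
    then show ?thesis using k by simp
  qed
  have e0: "ev k 0 = 1" using k by (simp add: ev_def eps_def)
  have G: "(\<lambda>j. ev k j + \<beta> j - eps 0 j) = (\<lambda>j. \<beta> j + eps k j)" by (auto simp: ev_def)
  have T: "(\<Sum>i\<in>{1..int n}. fa_smult (of_int (ev k (-i) * \<beta> i - ev k i * \<beta> (-i)))
              (fa_gen (\<lambda>j. ev k j + \<beta> j - eps i j - eps (-i) j)) :: (int \<Rightarrow> int, 'a) falg)
         = (\<Sum>i\<in>{1..int n}. if i = k then sc (of_int (- \<beta> (-k))) * fa_gen (\<lambda>j. \<beta> j + eps 0 j - eps (-k) j) else 0)"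
  proof (rule sum.cong[OF refl])
    fix i assume i: "i \<in> {1..int n}"
    show "fa_smult (of_int (ev k (-i) * \<beta> i - ev k i * \<beta> (-i))) (fa_gen (\<lambda>j. ev k j + \<beta> j - eps i j - eps (-i) j))
        = (if i = k then sc (of_int (- \<beta> (-k))) * fa_gen (\<lambda>j. \<beta> j + eps 0 j - eps (-k) j) else (0 :: (int \<Rightarrow> int, 'a) falg))"
    proof (cases "i = k")
      case True
      have "(\<lambda>j. ev k j + \<beta> j - eps i j - eps (-i) j) = (\<lambda>j. \<beta> j + eps 0 j - eps (-k) j)" using True by (auto simp: ev_def eps_def)
      then show ?thesis using True k by (simp add: fa_smult_eq ev_def eps_def)
    next
      case False
      then show ?thesis using i k by (simp add: fa_smult_eq ev_def eps_def)
    qed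
  qed
  show ?thesis using k unfolding Kbracket_def S e0 T G by (simp add: fa_smult_eq algebra_simps)
qed


lemma tsi_ideal: "isideal (two_sided_ideal R)"
  unfolding isideal_def
  using two_sided_ideal.zero two_sided_ideal.add two_sided_ideal.lmult two_sided_ideal.rmult
  by (fastforce simp: fa_mult_eq)

lemma IU_ideal: "isideal (IU n)" by (simp add: IU_def tsi_ideal)
lemma IUU_ideal: "isideal (IUU n)" by (simp add: IUU_def tsi_ideal)

lemma rel_U:
  assumes "a \<in> Kidx n" "b \<in> Kidx n"
  shows "cg (IU n) (fa_gen a * fa_gen b) (fa_gen b * fa_gen a + (Kbracket n a b :: (int \<Rightarrow> int, 'a::comm_ring_1) falg))"
proof -
  have "fa_mult (fa_gen a) (fa_gen b) - fa_mult (fa_gen b) (fa_gen a) - (Kbracket n a b :: (int \<Rightarrow> int, 'a) falg) \<in> relU n"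
    using assms unfolding relU_def by blast
  then have "fa_mult (fa_gen a) (fa_gen b) - fa_mult (fa_gen b) (fa_gen a) - (Kbracket n a b :: (int \<Rightarrow> int, 'a) falg) \<in> IU n"
    unfolding IU_def by (rule two_sided_ideal.gen)
  then show ?thesis by (simp add: cg_def fa_mult_eq algebra_simps)
qed

lemma rel_UU:
  assumes "a \<in> Kidx n" "b \<in> Kidx n"
  shows "cg (IUU n) (fa_gen (Inl a) * fa_gen (Inr b)) (fa_gen (Inr b) * (fa_gen (Inl a) :: ((int \<Rightarrow> int) + (int \<Rightarrow> int), 'a::comm_ring_1) falg))"
proof -
  have "fa_mult (fa_gen (Inl a)) (fa_gen (Inr b)) - fa_mult (fa_gen (Inr b)) (fa_gen (Inl a) :: ((int \<Rightarrow> int) + (int \<Rightarrow> int), 'a) falg) \<in> relUU n"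
    using assms unfolding relUU_def by blast
  then have "fa_mult (fa_gen (Inl a)) (fa_gen (Inr b)) - fa_mult (fa_gen (Inr b)) (fa_gen (Inl a) :: ((int \<Rightarrow> int) + (int \<Rightarrow> int), 'a) falg) \<in> IUU n"
    unfolding IUU_def by (rule two_sided_ideal.gen)
  then show ?thesis by (simp add: cg_def fa_mult_eq)
qed

lemma map_IU:
  assumes "p \<in> IU n" and f: "f = Inl \<or> f = Inr"
  shows "fa_map f p \<in> IUU n"
  using assms(1) unfolding IU_def
proof (induction rule: two_sided_ideal.induct)
  case (gen r)
  then have "fa_map f r \<in> relUU n" using f unfolding relUU_def by blast
  then show ?case unfolding IUU_def by (rule two_sided_ideal.gen)
next
  case zero then show ?case unfolding IUU_def using two_sided_ideal.zero by simp
next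
  case (add x y) then show ?case unfolding IUU_def by (simp add: fa_map_add two_sided_ideal.add)
next
  case (lmult x a) then show ?case unfolding IUU_def
    by (metis fa_map_mult fa_mult_eq two_sided_ideal.lmult)
next
  case (rmult x a) then show ?case unfolding IUU_def
    by (metis fa_map_mult fa_mult_eq two_sided_ideal.rmult)
qed

lemma cg_map: "cg (IU n) a b \<Longrightarrow> (f = Inl \<or> f = Inr) \<Longrightarrow> cg (IUU n) (fa_map f a) (fa_map f b)"
  unfolding cg_def by (metis fa_map_diff map_IU)

lemma lin_right:
  fixes z w :: "('g,'a::comm_ring_1) falg"
  assumes I: "isideal I" and r: "\<And>j. j \<in> A \<Longrightarrow> cg I (z * g j) (g j * w)"
  shows "cg I (z * (\<Sum>j\<in>A. sc (a j) * g j)) ((\<Sum>j\<in>A. sc (a j) * g j) * w)"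
proof -
  interpret qr I by (rule qr.intro[OF I])
  have "z * (\<Sum>j\<in>A. sc (a j) * g j) = (\<Sum>j\<in>A. sc (a j) * (z * g j))"
    unfolding sum_distrib_left
  proof (rule sum.cong[OF refl])
    fix j show "z * (sc (a j) * g j) = sc (a j) * (z * g j)"
      by (metis mult.assoc sc_comm)
  qed
  also have "cg I \<dots> (\<Sum>j\<in>A. sc (a j) * (g j * w))"
    by (intro cg_sum cg_lmult r)
  also have "\<dots> = (\<Sum>j\<in>A. sc (a j) * g j) * w"
    by (simp add: sum_distrib_right mult.assoc)
  finally show ?thesis .
qed


definition Qd :: "nat \<Rightarrow> int \<Rightarrow> (int \<Rightarrow> int) \<Rightarrow> nat \<Rightarrow> (int \<Rightarrow> int, 'a::field_char_0) falg" where
  "Qd n k \<alpha> m = (\<Sum>j\<le>m. sc (Acoef \<alpha> k j * Bcoef n \<alpha> (m - j)) * fa_gen (gam \<alpha> k m j))"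

lemma Kidx_eps: "a \<in> {- int n..int n} \<Longrightarrow> eps a \<in> Kidx n"
  by (auto simp: Kidx_def eps_def)

context fixes n :: nat and k :: int and \<alpha> :: "int \<Rightarrow> int"
  assumes k1: "1 \<le> k" and kn: "k \<le> int n" and aK: "\<alpha> \<in> Kidx n"
begin

lemma hv_K: "hv k \<in> Kidx n" using k1 kn by (auto simp: Kidx_def hv_def eps_def)
lemma ev_K: "ev k \<in> Kidx n" using k1 kn by (auto simp: Kidx_def ev_def eps_def)
lemma gam_K: "gam \<alpha> k m j \<in> Kidx n" using k1 kn aK by (auto simp: Kidx_def gam_def eps_def)

lemma gam_k: "j \<le> m \<Longrightarrow> gam \<alpha> k m j k - gam \<alpha> k m j (-k) = \<alpha> k - \<alpha> (-k) + int m"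
  using k1 by (simp add: gam_def eps_def of_nat_diff)

lemma gam_mk: "gam \<alpha> k m j (-k) = \<alpha> (-k) - int j"
  using k1 by (simp add: gam_def eps_def)

lemma gam_sum: "(\<Sum>i\<in>{- int n..int n}. gam \<alpha> k m j i) = (\<Sum>i\<in>{- int n..int n}. \<alpha> i) + int (m - j)"
proof -
  have mem: "k \<in> {- int n..int n}" "-k \<in> {- int n..int n}" "0 \<in> {- int n..int n}" using k1 kn by auto
  show ?thesis
    by (simp add: gam_def sum.distrib sum_subtractf sum_distrib_left[symmetric] sum_eps[OF mem(1)] sum_eps[OF mem(2)] sum_eps[OF mem(3)])
qed

lemma gam_s1: "j \<le> m \<Longrightarrow> (\<lambda>i. gam \<alpha> k m j i + eps k i) = gam \<alpha> k (Suc m) j"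
  by (auto simp: gam_def Suc_diff_le algebra_simps)

lemma gam_s2: "(\<lambda>i. gam \<alpha> k m j i + eps 0 i - eps (-k) i) = gam \<alpha> k (Suc m) (Suc j)"
  by (auto simp: gam_def algebra_simps)

lemma gam00: "gam \<alpha> k 0 0 = \<alpha>" by (simp add: gam_def)

lemma Qd0: "Qd n k \<alpha> 0 = fa_gen \<alpha>"
  by (simp add: Qd_def gam00 Acoef_def Bcoef_def)

lemma h_gen:
  assumes "\<beta> \<in> Kidx n"
  shows "cg (IU n) (fa_gen (hv k) * fa_gen \<beta>) (fa_gen \<beta> * (fa_gen (hv k) + sc (of_int (\<beta> k - \<beta> (-k)))) :: (int \<Rightarrow> int, 'a::field_char_0) falg)"
  using rel_U[OF hv_K assms, where 'a='a] Kb_h[OF k1 kn, of \<beta>, where 'a='a]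
  by (simp add: distrib_left sc_comm)

lemma gen_h:
  assumes "\<beta> \<in> Kidx n"
  shows "cg (IU n) (fa_gen \<beta> * fa_gen (hv k)) ((fa_gen (hv k) + sc (- of_int (\<beta> k - \<beta> (-k)))) * fa_gen \<beta> :: (int \<Rightarrow> int, 'a::field_char_0) falg)"
proof -
  have "fa_gen (hv k) * fa_gen \<beta> - (fa_gen \<beta> * fa_gen (hv k) + sc (of_int (\<beta> k - \<beta> (-k))) * fa_gen \<beta>) \<in> (IU n :: (int \<Rightarrow> int, 'a) falg set)"
    using rel_U[OF hv_K assms, where 'a='a] Kb_h[OF k1 kn, of \<beta>, where 'a='a] by (simp add: cg_def)
  then have "- (fa_gen (hv k) * fa_gen \<beta> - (fa_gen \<beta> * fa_gen (hv k) + sc (of_int (\<beta> k - \<beta> (-k))) * fa_gen \<beta>)) \<in> (IU n :: (int \<Rightarrow> int, 'a) falg set)"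
    by (rule qr.id_uminus[OF qr.intro[OF IU_ideal]])
  then show ?thesis by (simp add: cg_def algebra_simps sc_uminus sc_diff)
qed

lemma U_Re: "cg (IU n) (fa_gen (ev k) * fa_gen (hv k)) ((fa_gen (hv k) + sc (-1)) * (fa_gen (ev k) :: (int \<Rightarrow> int, 'a::field_char_0) falg))"
proof -
  have "ev k k - ev k (-k) = 1" using k1 by (simp add: ev_def eps_def)
  then show ?thesis using gen_h[OF ev_K, where 'a='a] by simp
qed

lemma U_Rx: "cg (IU n) (fa_gen \<alpha> * fa_gen (hv k)) ((fa_gen (hv k) + sc (- of_int (\<alpha> k - \<alpha> (-k)))) * (fa_gen \<alpha> :: (int \<Rightarrow> int, 'a::field_char_0) falg))"
  by (rule gen_h[OF aK])

lemma U_hx: "cg (IU n) (fa_gen (hv k) * fa_gen \<alpha>) (fa_gen \<alpha> * (fa_gen (hv k) + sc (of_int (\<alpha> k - \<alpha> (-k)))) :: (int \<Rightarrow> int, 'a::field_char_0) falg)"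
  by (rule h_gen[OF aK])

lemma U_RQ: "cg (IU n) (fa_gen (hv k) * Qd n k \<alpha> m) (Qd n k \<alpha> m * (fa_gen (hv k) + sc (of_int (\<alpha> k - \<alpha> (-k)) + of_nat m)) :: (int \<Rightarrow> int, 'a::field_char_0) falg)"
  unfolding Qd_def
proof (rule lin_right[OF IU_ideal])
  fix j assume "j \<in> {..m}"
  then have "of_int (gam \<alpha> k m j k - gam \<alpha> k m j (-k)) = (of_int (\<alpha> k - \<alpha> (-k)) + of_nat m :: 'a)"
    by (simp add: gam_k)
  then show "cg (IU n) (fa_gen (hv k) * fa_gen (gam \<alpha> k m j)) (fa_gen (gam \<alpha> k m j) * (fa_gen (hv k) + sc (of_int (\<alpha> k - \<alpha> (-k)) + of_nat m)) :: (int \<Rightarrow> int, 'a) falg)"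
    using h_gen[OF gam_K, of m j, where 'a='a] by simp
qed

end


lemma A_Suc: "Acoef \<alpha> k (Suc j) * of_nat (Suc j) = Acoef \<alpha> k j * (of_nat j - of_int (\<alpha> (-k)) :: 'a::field_char_0)"
proof -
  have nz: "(of_nat (Suc j)::'a) \<noteq> 0" "fact j \<noteq> (0::'a)" by (rule of_nat_neq_0, simp)
  show ?thesis unfolding Acoef_def prod.lessThan_Suc fact_Suc using nz by (simp add: field_simps del: of_nat_Suc)
qed

lemma B_Suc: "Bcoef n \<alpha> (Suc m) * of_nat (Suc m) = Bcoef n \<alpha> m * (of_int (knorm n \<alpha> - \<alpha> 0) + of_nat m :: 'a::field_char_0)"
proof -
  have nz: "(of_nat (Suc m)::'a) \<noteq> 0" "fact m \<noteq> (0::'a)" by (rule of_nat_neq_0, simp)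
  show ?thesis unfolding Bcoef_def prod.lessThan_Suc fact_Suc using nz by (simp add: field_simps del: of_nat_Suc)
qed

context fixes n :: nat and k :: int and \<alpha> :: "int \<Rightarrow> int"
  assumes k1: "1 \<le> k" and kn: "k \<le> int n" and aK: "\<alpha> \<in> Kidx n"
begin

lemma e_gen:
  assumes "\<beta> \<in> Kidx n"
  shows "cg (IU n) (fa_gen \<beta> * fa_gen (ev k)) (fa_gen (ev k) * fa_gen \<beta> - (Kbracket n (ev k) \<beta> :: (int \<Rightarrow> int, 'a::field_char_0) falg))"
proof -
  have "fa_gen (ev k) * fa_gen \<beta> - (fa_gen \<beta> * fa_gen (ev k) + (Kbracket n (ev k) \<beta> :: (int \<Rightarrow> int, 'a) falg)) \<in> IU n"
    using rel_U[OF ev_K[OF k1 kn aK] assms, where 'a='a] by (simp add: cg_def)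
  then have "- (fa_gen (ev k) * fa_gen \<beta> - (fa_gen \<beta> * fa_gen (ev k) + (Kbracket n (ev k) \<beta> :: (int \<Rightarrow> int, 'a) falg))) \<in> IU n"
    by (rule qr.id_uminus[OF qr.intro[OF IU_ideal]])
  then show ?thesis by (simp add: cg_def algebra_simps)
qed

lemma Kb_gam:
  assumes jm: "j \<le> m"
  shows "(Kbracket n (ev k) (gam \<alpha> k m j) :: (int \<Rightarrow> int, 'a::field_char_0) falg)
   = sc (of_int (knorm n \<alpha> - \<alpha> 0) + of_nat (m - j)) * fa_gen (gam \<alpha> k (Suc m) j)
   + sc (of_nat j - of_int (\<alpha> (-k))) * fa_gen (gam \<alpha> k (Suc m) (Suc j))"
proof -
  have s: "(\<Sum>i\<in>{1..int n}. gam \<alpha> k m j i + gam \<alpha> k m j (-i)) + gam \<alpha> k m j 0 = (\<Sum>i\<in>{- int n..int n}. \<alpha> i) + int (m - j)"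
    using gam_sum[OF k1 kn aK, of m j] sum_sym_split[of "gam \<alpha> k m j" n] by simp
  have "of_int ((\<Sum>i\<in>{1..int n}. gam \<alpha> k m j i + gam \<alpha> k m j (-i)) + gam \<alpha> k m j 0 - 2)
      = (of_int (knorm n \<alpha> - \<alpha> 0) + of_nat (m - j) :: 'a)"
    unfolding s by (simp add: knorm_def)
  moreover have "(of_int (- gam \<alpha> k m j (-k)) :: 'a) = of_nat j - of_int (\<alpha> (-k))"
    by (simp add: gam_mk[OF k1 kn aK])
  ultimately show ?thesis
    using Kb_e[OF k1 kn, of "gam \<alpha> k m j", where 'a='a] gam_s1[OF k1 kn aK jm] gam_s2[OF k1 kn aK, of m j]
    by simp
qed

lemma Kb_sum: "(\<Sum>j\<le>m. sc (Acoef \<alpha> k j * Bcoef n \<alpha> (m - j)) * (Kbracket n (ev k) (gam \<alpha> k m j) :: (int \<Rightarrow> int, 'a::field_char_0) falg))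
   = of_nat (Suc m) * Qd n k \<alpha> (Suc m)"
proof -
  define K where "K = (of_int (knorm n \<alpha> - \<alpha> 0) :: 'a)"
  define G where "G j = (fa_gen (gam \<alpha> k (Suc m) j) :: (int \<Rightarrow> int, 'a) falg)" for j
  define b where "b j = (Acoef \<alpha> k j * Bcoef n \<alpha> (Suc m - j) :: 'a)" for j
  have t1: "Acoef \<alpha> k j * Bcoef n \<alpha> (m - j) * (K + of_nat (m - j)) = b j * of_nat (Suc m - j)" if "j \<le> m" for j
  proof -
    have "Bcoef n \<alpha> (m - j) * (K + of_nat (m - j)) = Bcoef n \<alpha> (Suc (m - j)) * of_nat (Suc (m - j))"
      unfolding K_def by (rule B_Suc[symmetric])
    then show ?thesis using that by (simp add: b_def Suc_diff_le mult.assoc)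
  qed
  have t2: "Acoef \<alpha> k j * Bcoef n \<alpha> (m - j) * (of_nat j - of_int (\<alpha> (-k))) = b (Suc j) * of_nat (Suc j)" for j
  proof -
    have "b (Suc j) * of_nat (Suc j) = (Acoef \<alpha> k (Suc j) * of_nat (Suc j)) * Bcoef n \<alpha> (m - j)"
      by (simp only: b_def diff_Suc_Suc mult_ac)
    also have "\<dots> = Acoef \<alpha> k j * (of_nat j - of_int (\<alpha> (-k))) * Bcoef n \<alpha> (m - j)"
      by (simp only: A_Suc)
    finally show ?thesis by (simp only: mult_ac)
  qed
  have "(\<Sum>j\<le>m. sc (Acoef \<alpha> k j * Bcoef n \<alpha> (m - j)) * (Kbracket n (ev k) (gam \<alpha> k m j) :: (int \<Rightarrow> int, 'a) falg))
     = (\<Sum>j\<le>m. sc (b j * of_nat (Suc m - j)) * G j) + (\<Sum>j\<le>m. sc (b (Suc j) * of_nat (Suc j)) * G (Suc j))"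
    unfolding sum.distrib[symmetric]
  proof (rule sum.cong[OF refl])
    fix j assume "j \<in> {..m}"
    then have jm: "j \<le> m" by simp
    show "sc (Acoef \<alpha> k j * Bcoef n \<alpha> (m - j)) * Kbracket n (ev k) (gam \<alpha> k m j) =
        sc (b j * of_nat (Suc m - j)) * G j + sc (b (Suc j) * of_nat (Suc j)) * G (Suc j)"
    proof -
      have t1': "Acoef \<alpha> k j * Bcoef n \<alpha> (m - j) * K + Acoef \<alpha> k j * Bcoef n \<alpha> (m - j) * of_nat (m - j) = b j * of_nat (Suc m - j)"
        using t1[OF jm] by (simp only: distrib_left)
      show ?thesis unfolding Kb_gam[OF jm] G_def K_def[symmetric]
        by (simp only: distrib_left mult.assoc[symmetric] sc_mult[symmetric] t1' t2)
    qed
  qed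
  also have "(\<Sum>j\<le>m. sc (b j * of_nat (Suc m - j)) * G j) = (\<Sum>j\<le>Suc m. sc (b j * of_nat (Suc m - j)) * G j)"
    by simp
  also have "(\<Sum>j\<le>m. sc (b (Suc j) * of_nat (Suc j)) * G (Suc j)) = (\<Sum>j\<le>Suc m. sc (b j * of_nat j) * G j)"
    by (simp only: sum.atMost_Suc_shift[of "\<lambda>j. sc (b j * of_nat j) * G j"]) simp
  also have "(\<Sum>j\<le>Suc m. sc (b j * of_nat (Suc m - j)) * G j) + (\<Sum>j\<le>Suc m. sc (b j * of_nat j) * G j)
      = (\<Sum>j\<le>Suc m. of_nat (Suc m) * (sc (b j) * G j))"
    unfolding sum.distrib[symmetric]
  proof (rule sum.cong[OF refl])
    fix j assume "j \<in> {..Suc m}"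
    then have "of_nat (Suc m - j) + of_nat j = (of_nat (Suc m) :: 'a)" by (simp add: of_nat_diff)
    then have "sc (b j * of_nat (Suc m - j)) + sc (b j * of_nat j) = of_nat (Suc m) * sc (b j)"
    proof -
      assume hh: "of_nat (Suc m - j) + of_nat j = (of_nat (Suc m) :: 'a)"
      have "sc (b j * of_nat (Suc m - j)) + sc (b j * of_nat j) = sc (b j * (of_nat (Suc m - j) + of_nat j))"
        by (simp only: sc_add[symmetric] distrib_left)
      also have "\<dots> = sc (of_nat (Suc m) * b j)" by (simp only: hh mult.commute)
      finally show ?thesis by (simp only: sc_mult sc_of_nat)
    qed
    then show "sc (b j * of_nat (Suc m - j)) * G j + sc (b j * of_nat j) * G j = of_nat (Suc m) * (sc (b j) * G j)"
      by (metis distrib_right mult.assoc)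
  qed
  also have "\<dots> = of_nat (Suc m) * Qd n k \<alpha> (Suc m)"
    by (simp only: Qd_def b_def G_def sum_distrib_left)
  finally show ?thesis .
qed

lemma U_RQe: "cg (IU n) (Qd n k \<alpha> m * fa_gen (ev k))
   (fa_gen (ev k) * Qd n k \<alpha> m - of_nat (Suc m) * (Qd n k \<alpha> (Suc m) :: (int \<Rightarrow> int, 'a::field_char_0) falg))"
proof -
  interpret qr "IU n :: (int \<Rightarrow> int, 'a) falg set" by (rule qr.intro[OF IU_ideal])
  have "Qd n k \<alpha> m * fa_gen (ev k) = (\<Sum>j\<le>m. sc (Acoef \<alpha> k j * Bcoef n \<alpha> (m - j)) * (fa_gen (gam \<alpha> k m j) * fa_gen (ev k)) :: (int \<Rightarrow> int, 'a) falg)"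
    by (simp add: Qd_def sum_distrib_right mult.assoc)
  also have "cg (IU n) \<dots> (\<Sum>j\<le>m. sc (Acoef \<alpha> k j * Bcoef n \<alpha> (m - j)) * (fa_gen (ev k) * fa_gen (gam \<alpha> k m j) - Kbracket n (ev k) (gam \<alpha> k m j)))"
    by (intro cg_sum cg_lmult e_gen gam_K[OF k1 kn aK])
  also have "\<dots> = fa_gen (ev k) * Qd n k \<alpha> m - (\<Sum>j\<le>m. sc (Acoef \<alpha> k j * Bcoef n \<alpha> (m - j)) * Kbracket n (ev k) (gam \<alpha> k m j))"
  proof -
    have "fa_gen (ev k) * Qd n k \<alpha> m = (\<Sum>j\<le>m. sc (Acoef \<alpha> k j * Bcoef n \<alpha> (m - j)) * (fa_gen (ev k) * fa_gen (gam \<alpha> k m j)) :: (int \<Rightarrow> int, 'a) falg)"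
      unfolding Qd_def sum_distrib_left by (intro sum.cong refl) (metis mult.assoc sc_comm)
    then show ?thesis by (simp add: right_diff_distrib sum_subtractf)
  qed
  also have "\<dots> = fa_gen (ev k) * Qd n k \<alpha> m - of_nat (Suc m) * Qd n k \<alpha> (Suc m)"
    by (simp only: Kb_sum)
  finally show ?thesis .
qed

end


lemma sc_pull: "P * (sc c * Y) = sc c * (P * Y)"
proof -
  have "P * (sc c * Y) = (P * sc c) * Y" by (simp only: mult.assoc)
  also have "P * sc c = sc c * P" by (rule sc_comm[symmetric])
  finally show ?thesis by (simp only: mult.assoc)
qed

lemma hK_eq: "hK k = fa_gen (hv k)" by (simp add: hK_def hv_def)
lemma eK_eq: "eK k = fa_gen (ev k)" by (simp add: eK_def ev_def)

lemma antipode_gen: "fa_antipode (fa_gen g :: ('g,'a::comm_ring_1) falg) = - fa_gen g"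
  by (simp add: fa_antipode_def fa_gen_def single_uminus)

lemma sc_single: "sc c * Poly_Mapping.single u 1 = Poly_Mapping.single u (c::'a::comm_ring_1)"
  by (simp add: sc_def mult_single plus_list_def)

lemma antipode_pow: "fa_antipode (fa_gen g ^ r :: ('g,'a::comm_ring_1) falg) = sc ((-1)^r) * fa_gen g ^ r"
  by (simp add: fa_gen_pow fa_antipode_def sc_single)

lemma coprod_gen: "fa_coprod0 (fa_gen g :: ('g,'a::comm_ring_1) falg) = fa_gen (Inl g) + fa_gen (Inr g)"
  by (simp add: fa_coprod0_def fa_gen_def fa_smult_eq fa_mult_eq fa_const_eq)

lemma ffp_0: "ffp a 0 = 1" by (simp add: ffp_def)

lemma twistF_eq: "twistF k = fps_nth ((Fs (fa_map Inl (fa_gen (hv k))) (fa_map Inr (fa_gen (ev k))) :: ((int \<Rightarrow> int) + (int \<Rightarrow> int), 'a::field_char_0) falg fps))"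
proof
  fix r
  show "twistF k r = fps_nth (Fs (fa_map Inl (fa_gen (hv k))) (fa_map Inr (fa_gen (ev k)))) r"
    unfolding twistF_def Fs_def tensor_def fa_smult_eq fa_mult_eq fa_falling_eq fa_pow_eq hK_eq eK_eq
        evp_map fa_map_power evp_smult fps_nth_Abs_fps
    by (simp only: mult.assoc)
qed

lemma twistV_aux: "sc ((-1)^r / fact r) * (P * (sc ((-1)^r) * E)) = sc (1 / fact r) * P * (E :: ('g,'a::field_char_0) falg)"
proof -
  have "(-1::'a)^r * (-1)^r = 1" by (simp flip: power_mult_distrib)
  then have 3: "((-1)^r / fact r) * (-1)^r = (1 / fact r :: 'a)" by (simp add: field_simps)
  have "sc ((-1)^r / fact r) * (P * (sc ((-1)^r) * E)) = sc ((-1)^r / fact r) * (sc ((-1)^r) * (P * E))"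
    by (simp only: sc_pull[of P])
  also have "\<dots> = sc (((-1)^r / fact r) * (-1)^r) * (P * E)" by (simp only: sc_mult mult.assoc)
  also have "\<dots> = sc (1 / fact r) * P * E" by (simp only: 3 mult.assoc)
  finally show ?thesis .
qed

lemma twistV_eq: "twistV k = fps_nth ((Vs (fa_gen (hv k)) (fa_gen (ev k)) :: (int \<Rightarrow> int, 'a::field_char_0) falg fps))"
proof
  fix r
  show "twistV k r = fps_nth (Vs (fa_gen (hv k)) (fa_gen (ev k)) :: (int \<Rightarrow> int, 'a) falg fps) r"
    unfolding twistV_def fa_smult_eq fa_mult_eq fa_falling_eq fa_pow_eq hK_eq eK_eq antipode_pow
      Vs_def fps_nth_Abs_fps evp_smult
    by (rule twistV_aux)
qed


lemma rearrD: "sc (s * a * b) * (P * (sc \<kappa> * E' * G)) = sc s * P * (sc \<kappa> * E') * (sc (a * b) * (G :: ('g,'a::comm_ring_1) falg))"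
proof -
  have "sc (s * a * b) * (P * (sc \<kappa> * E' * G)) = sc (s * a * b) * (P * (sc \<kappa> * (E' * G)))" by (simp only: mult.assoc)
  also have "\<dots> = sc (s * a * b) * (sc \<kappa> * (P * (E' * G)))" by (simp only: sc_pull[of P])
  also have "\<dots> = sc (s * a * b * \<kappa>) * (P * (E' * G))" by (simp only: sc_mult mult.assoc)
  finally have L: "sc (s * a * b) * (P * (sc \<kappa> * E' * G)) = sc (s * a * b * \<kappa>) * (P * (E' * G))" .
  have "sc s * P * (sc \<kappa> * E') * (sc (a * b) * G) = sc s * (P * (sc \<kappa> * (E' * (sc (a * b) * G))))" by (simp only: mult.assoc)
  also have "\<dots> = sc s * (P * (sc \<kappa> * (sc (a * b) * (E' * G))))" by (simp only: sc_pull[of E'])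
  also have "\<dots> = sc s * (sc \<kappa> * (P * (sc (a * b) * (E' * G))))" by (simp only: sc_pull[of P])
  also have "\<dots> = sc s * (sc \<kappa> * (sc (a * b) * (P * (E' * G))))" by (simp only: sc_pull[of P])
  also have "\<dots> = sc (s * \<kappa> * (a * b)) * (P * (E' * G))" by (simp only: sc_mult mult.assoc)
  also have "s * \<kappa> * (a * b) = s * a * b * \<kappa>" by (simp only: mult_ac)
  finally show ?thesis using L by simp
qed

lemma rearrS: "sc ab * (sc \<kappa> * E' * (G * R)) = (sc \<kappa> * E') * (sc ab * G * (R :: ('g,'a::comm_ring_1) falg))"
proof -
  have "sc ab * (sc \<kappa> * E' * (G * R)) = sc (ab * \<kappa>) * (E' * (G * R))" by (simp only: sc_mult mult.assoc)
  moreover have "(sc \<kappa> * E') * (sc ab * G * R) = sc (\<kappa> * ab) * (E' * (G * R))"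
  proof -
    have "(sc \<kappa> * E') * (sc ab * G * R) = sc \<kappa> * (E' * (sc ab * (G * R)))" by (simp only: mult.assoc)
    also have "\<dots> = sc \<kappa> * (sc ab * (E' * (G * R)))" by (simp only: sc_pull[of E'])
    finally show ?thesis by (simp only: sc_mult mult.assoc)
  qed
  ultimately show ?thesis by (simp add: mult.commute)
qed

context fixes n :: nat and k :: int and \<alpha> :: "int \<Rightarrow> int"
  assumes k1: "1 \<le> k" and kn: "k \<le> int n" and aK: "\<alpha> \<in> Kidx n"
begin

lemma Qd_map: "fa_map Inr (Qd n k \<alpha> m :: (int \<Rightarrow> int, 'a::field_char_0) falg)
   = (\<Sum>j\<le>m. sc (Acoef \<alpha> k j * Bcoef n \<alpha> (m - j)) * fa_gen (Inr (gam \<alpha> k m j)))"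
  by (simp add: Qd_def fa_map_sum fa_map_mult fa_map_sc fa_map_gen)

lemma DeltaRHS_eq:
  "DeltaRHS n k \<alpha> = fps_nth (fps_const (fa_map Inl (fa_gen \<alpha>)) * Pw (fa_map Inl (fa_gen (hv k))) (fa_map Inr (fa_gen (ev k))) (of_int (\<alpha> k - \<alpha> (-k)))
     + R2s (fa_map Inl (fa_gen (hv k))) (fa_map Inr (fa_gen (ev k))) (\<lambda>m. fa_map Inr (Qd n k \<alpha> m)) :: ((int \<Rightarrow> int) + (int \<Rightarrow> int), 'a::field_char_0) falg fps)"
proof
  fix d
  let ?H = "fa_map Inl (fa_gen (hv k)) :: ((int \<Rightarrow> int) + (int \<Rightarrow> int), 'a) falg"
  let ?E = "fa_map Inr (fa_gen (ev k)) :: ((int \<Rightarrow> int) + (int \<Rightarrow> int), 'a) falg"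
  have p1: "tensor (fa_gen \<alpha>) (oneminus_pow (eK k) (of_int (\<alpha> k - \<alpha> (-k))) d)
     = fps_nth (fps_const (fa_map Inl (fa_gen \<alpha>)) * Pw ?H ?E (of_int (\<alpha> k - \<alpha> (-k)))) d"
    by (simp add: tensor_def oneminus_pow_def fa_smult_eq fa_pow_eq fa_mult_eq eK_eq Pw_def evp_const
        fa_map_mult fa_map_sc fa_map_power)
  have p2: "(\<Sum>l\<le>d. \<Sum>j\<le>l. fa_smult ((-1)^l * Acoef \<alpha> k j * Bcoef n \<alpha> (l - j))
        (tensor (fa_rising (hK k) 0 l) (fa_mult (oneminus_pow (eK k) (- of_nat l) (d - l)) (fa_gen (gam \<alpha> k l j)))))
     = fps_nth (R2s ?H ?E (\<lambda>m. fa_map Inr (Qd n k \<alpha> m))) d"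
    unfolding R2s_def tsum_nth
  proof (rule sum.cong[OF refl])
    fix l assume "l \<in> {..d}"
    let ?P = "evp ?H (rfp 0 l)"
    let ?\<kappa> = "(-1)^(d-l) * ((- of_nat l) gchoose (d-l)) :: 'a"
    have "fps_nth (fps_const (evp ?H (smult ((-1)^l) (rfp 0 l))) * Pw ?H ?E (- of_nat l) * fps_const (fa_map Inr (Qd n k \<alpha> l))) (d - l)
        = sc ((-1)^l) * ?P * (sc ?\<kappa> * ?E ^ (d - l)) * (\<Sum>j\<le>l. sc (Acoef \<alpha> k j * Bcoef n \<alpha> (l - j)) * fa_gen (Inr (gam \<alpha> k l j)))"
      by (simp add: Pw_def evp_const evp_smult Qd_map)
    also have "\<dots> = (\<Sum>j\<le>l. sc ((-1)^l) * ?P * (sc ?\<kappa> * ?E ^ (d - l)) * (sc (Acoef \<alpha> k j * Bcoef n \<alpha> (l - j)) * fa_gen (Inr (gam \<alpha> k l j))))"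
      by (simp only: sum_distrib_left)
    also have "\<dots> = (\<Sum>j\<le>l. fa_smult ((-1)^l * Acoef \<alpha> k j * Bcoef n \<alpha> (l - j))
        (tensor (fa_rising (hK k) 0 l) (fa_mult (oneminus_pow (eK k) (- of_nat l) (d - l)) (fa_gen (gam \<alpha> k l j)))))"
    proof (rule sum.cong[OF refl])
      fix j
      have "fa_smult ((-1)^l * Acoef \<alpha> k j * Bcoef n \<alpha> (l - j))
        (tensor (fa_rising (hK k) 0 l) (fa_mult (oneminus_pow (eK k) (- of_nat l) (d - l)) (fa_gen (gam \<alpha> k l j))))
        = sc ((-1)^l * Acoef \<alpha> k j * Bcoef n \<alpha> (l - j)) * (?P * (sc ?\<kappa> * ?E ^ (d - l) * fa_gen (Inr (gam \<alpha> k l j))))"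
        by (simp add: tensor_def oneminus_pow_def fa_smult_eq fa_pow_eq fa_mult_eq eK_eq hK_eq fa_rising_eq
            evp_map fa_map_mult fa_map_sc fa_map_power fa_map_gen)
      then show "sc ((-1)^l) * ?P * (sc ?\<kappa> * ?E ^ (d - l)) * (sc (Acoef \<alpha> k j * Bcoef n \<alpha> (l - j)) * fa_gen (Inr (gam \<alpha> k l j)))
        = fa_smult ((-1)^l * Acoef \<alpha> k j * Bcoef n \<alpha> (l - j))
        (tensor (fa_rising (hK k) 0 l) (fa_mult (oneminus_pow (eK k) (- of_nat l) (d - l)) (fa_gen (gam \<alpha> k l j))))"
        by (simp only: rearrD)
    qed
    finally show "(\<Sum>j\<le>l. fa_smult ((-1)^l * Acoef \<alpha> k j * Bcoef n \<alpha> (l - j))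
        (tensor (fa_rising (hK k) 0 l) (fa_mult (oneminus_pow (eK k) (- of_nat l) (d - l)) (fa_gen (gam \<alpha> k l j)))))
      = fps_nth (fps_const (evp ?H (smult ((-1)^l) (rfp 0 l))) * Pw ?H ?E (- of_nat l) * fps_const (fa_map Inr (Qd n k \<alpha> l))) (d - l)"
      by simp
  qed
  show "DeltaRHS n k \<alpha> d = fps_nth (fps_const (fa_map Inl (fa_gen \<alpha>)) * Pw ?H ?E (of_int (\<alpha> k - \<alpha> (-k)))
     + R2s ?H ?E (\<lambda>m. fa_map Inr (Qd n k \<alpha> m))) d"
    unfolding DeltaRHS_def p1 p2 by simp
qed

end


context fixes n :: nat and k :: int and \<alpha> :: "int \<Rightarrow> int"
  assumes k1: "1 \<le> k" and kn: "k \<le> int n" and aK: "\<alpha> \<in> Kidx n"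
begin

lemma SRHS_eq:
  "SRHS n k \<alpha> = fps_nth (- (Pw (fa_gen (hv k)) (fa_gen (ev k)) (- of_int (\<alpha> k - \<alpha> (-k))) * Zs (fa_gen (hv k)) (Qd n k \<alpha>))
     :: (int \<Rightarrow> int, 'a::field_char_0) falg fps)"
proof
  fix d
  let ?h = "fa_gen (hv k) :: (int \<Rightarrow> int, 'a) falg"
  let ?e = "fa_gen (ev k) :: (int \<Rightarrow> int, 'a) falg"
  let ?c = "of_int (\<alpha> k - \<alpha> (-k)) :: 'a"
  have "fps_nth (Pw ?h ?e (- ?c) * Zs ?h (Qd n k \<alpha>)) d
     = (\<Sum>l\<le>d. fps_nth (Pw ?h ?e (- ?c)) (d - l) * (Qd n k \<alpha> l * evp ?h (rfp 1 l)))"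
    by (simp add: Zs_def tsum_mult_left tsum_nth)
  also have "\<dots> = (\<Sum>l\<le>d. \<Sum>j\<le>l. fa_smult (Acoef \<alpha> k j * Bcoef n \<alpha> (l - j))
        (fa_mult (oneminus_pow (eK k) (of_int (\<alpha> (-k) - \<alpha> k)) (d - l))
                 (fa_mult (fa_gen (gam \<alpha> k l j)) (fa_rising (hK k) 1 l))))"
  proof (rule sum.cong[OF refl])
    fix l
    let ?\<kappa> = "(-1)^(d-l) * ((- ?c) gchoose (d-l))"
    have "fps_nth (Pw ?h ?e (- ?c)) (d - l) * (Qd n k \<alpha> l * evp ?h (rfp 1 l))
       = (\<Sum>j\<le>l. (sc ?\<kappa> * ?e ^ (d - l)) * (sc (Acoef \<alpha> k j * Bcoef n \<alpha> (l - j)) * fa_gen (gam \<alpha> k l j) * evp ?h (rfp 1 l)))"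
      by (simp add: Pw_def evp_const Qd_def sum_distrib_left sum_distrib_right)
    also have "\<dots> = (\<Sum>j\<le>l. fa_smult (Acoef \<alpha> k j * Bcoef n \<alpha> (l - j))
        (fa_mult (oneminus_pow (eK k) (of_int (\<alpha> (-k) - \<alpha> k)) (d - l))
                 (fa_mult (fa_gen (gam \<alpha> k l j)) (fa_rising (hK k) 1 l))))"
    proof (rule sum.cong[OF refl])
      fix j
      have "of_int (\<alpha> (-k) - \<alpha> k) = - ?c" by simp
      then have "fa_smult (Acoef \<alpha> k j * Bcoef n \<alpha> (l - j))
        (fa_mult (oneminus_pow (eK k) (of_int (\<alpha> (-k) - \<alpha> k)) (d - l))
                 (fa_mult (fa_gen (gam \<alpha> k l j)) (fa_rising (hK k) 1 l)))
        = sc (Acoef \<alpha> k j * Bcoef n \<alpha> (l - j)) * (sc ?\<kappa> * ?e ^ (d - l) * (fa_gen (gam \<alpha> k l j) * evp ?h (rfp 1 l)))"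
        by (simp only: oneminus_pow_def fa_smult_eq fa_pow_eq fa_mult_eq eK_eq hK_eq fa_rising_eq)
      then show "(sc ?\<kappa> * ?e ^ (d - l)) * (sc (Acoef \<alpha> k j * Bcoef n \<alpha> (l - j)) * fa_gen (gam \<alpha> k l j) * evp ?h (rfp 1 l))
        = fa_smult (Acoef \<alpha> k j * Bcoef n \<alpha> (l - j))
        (fa_mult (oneminus_pow (eK k) (of_int (\<alpha> (-k) - \<alpha> k)) (d - l))
                 (fa_mult (fa_gen (gam \<alpha> k l j)) (fa_rising (hK k) 1 l)))"
        by (simp only: rearrS)
    qed
    finally show "fps_nth (Pw ?h ?e (- ?c)) (d - l) * (Qd n k \<alpha> l * evp ?h (rfp 1 l)) = \<dots>" .
  qed
  finally show "SRHS n k \<alpha> d = fps_nth (- (Pw ?h ?e (- ?c) * Zs ?h (Qd n k \<alpha>))) d"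
    unfolding SRHS_def by simp
qed

lemma UU_rels:
  defines "H \<equiv> fa_map Inl (fa_gen (hv k)) :: ((int \<Rightarrow> int) + (int \<Rightarrow> int), 'a::field_char_0) falg"
    and "E \<equiv> fa_map Inr (fa_gen (ev k)) :: ((int \<Rightarrow> int) + (int \<Rightarrow> int), 'a) falg"
    and "X \<equiv> fa_map Inl (fa_gen \<alpha>) :: ((int \<Rightarrow> int) + (int \<Rightarrow> int), 'a) falg"
    and "Q \<equiv> \<lambda>m. fa_map Inr (Qd n k \<alpha> m) :: ((int \<Rightarrow> int) + (int \<Rightarrow> int), 'a) falg"
  shows "cg (IUU n) (E * H) (H * E)"
    and "cg (IUU n) (H * X) (X * (H + sc (of_int (\<alpha> k - \<alpha> (-k)))))"
    and "cg (IUU n) (E * X) (X * E)"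
    and "\<And>m. cg (IUU n) (H * Q m) (Q m * H)"
    and "\<And>m. cg (IUU n) (Q m * E) (E * Q m - of_nat (Suc m) * Q (Suc m))"
proof -
  interpret qr "IUU n :: ((int \<Rightarrow> int) + (int \<Rightarrow> int), 'a) falg set" by (rule qr.intro[OF IUU_ideal])
  show "cg (IUU n) (E * H) (H * E)"
    unfolding H_def E_def fa_map_gen by (rule cg_sym, rule rel_UU[OF hv_K[OF k1 kn aK] ev_K[OF k1 kn aK]])
  show "cg (IUU n) (H * X) (X * (H + sc (of_int (\<alpha> k - \<alpha> (-k)))))"
    using cg_map[OF U_hx[OF k1 kn aK, where 'a='a], of Inl]
    unfolding H_def X_def by (simp add: fa_map_mult fa_map_add fa_map_sc)
  show "cg (IUU n) (E * X) (X * E)"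
    unfolding X_def E_def fa_map_gen by (rule cg_sym, rule rel_UU[OF aK ev_K[OF k1 kn aK]])
  show "cg (IUU n) (H * Q m) (Q m * H)" for m
    unfolding Q_def Qd_map[OF k1 kn aK] H_def fa_map_gen
    by (rule lin_right[OF IUU_ideal]) (rule rel_UU[OF hv_K[OF k1 kn aK] gam_K[OF k1 kn aK]])
  show "cg (IUU n) (Q m * E) (E * Q m - of_nat (Suc m) * Q (Suc m))" for m
    using cg_map[OF U_RQe[OF k1 kn aK, of m, where 'a='a], of Inr]
    unfolding Q_def E_def by (simp add: fa_map_mult fa_map_diff fa_map_of_nat del: of_nat_Suc)
qed

end


theorem mainTheorem17:
  fixes n :: nat and k :: int and \<alpha> :: "int \<Rightarrow> int"
  assumes "1 \<le> n" and "1 \<le> k" and "k \<le> int n"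
    and "\<alpha> \<in> Kidx n" and "\<forall>i. 0 \<le> \<alpha> i"
  shows "ps_cong (IUU n) (twisted_coproduct k (fa_gen \<alpha>)) (DeltaRHS n k \<alpha> :: _ \<Rightarrow> (_, 'a::field_char_0) falg)
       \<and> ps_cong (IU n) (twisted_antipode k (fa_gen \<alpha>)) (SRHS n k \<alpha> :: _ \<Rightarrow> (_, 'a) falg)
       \<and> fa_counit (fa_gen \<alpha> :: (int \<Rightarrow> int, 'a) falg) = 0"
proof (intro conjI)
  note k1 = assms(2) and kn = assms(3) and aK = assms(4)
  show "fa_counit (fa_gen \<alpha> :: (int \<Rightarrow> int, 'a) falg) = 0"
    by (simp add: fa_counit_def fa_gen_def lookup_single)
next
  note k1 = assms(2) and kn = assms(3) and aK = assms(4)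
  define H where "H = (fa_map Inl (fa_gen (hv k)) :: ((int \<Rightarrow> int) + (int \<Rightarrow> int), 'a) falg)"
  define E where "E = (fa_map Inr (fa_gen (ev k)) :: ((int \<Rightarrow> int) + (int \<Rightarrow> int), 'a) falg)"
  define X where "X = (fa_map Inl (fa_gen \<alpha>) :: ((int \<Rightarrow> int) + (int \<Rightarrow> int), 'a) falg)"
  define Q where "Q = (\<lambda>m. fa_map Inr (Qd n k \<alpha> m) :: ((int \<Rightarrow> int) + (int \<Rightarrow> int), 'a) falg)"
  define Fi where "Fi = Abs_fps (ps_inv (twistF k :: _ \<Rightarrow> (_, 'a) falg))"
  have tF: "twistF k = fps_nth (Fs H E)" unfolding H_def E_def by (rule twistF_eq)
  have AF: "Abs_fps (twistF k) = Fs H E" by (simp add: tF fps_nth_inverse)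
  have F0: "twistF k 0 = (1 :: (_, 'a) falg)" by (simp add: tF Fs_def ffp_0 evp_const)
  have Finv: "Fs H E * Fi = 1" using ps_inv_right[of "twistF k", OF F0] AF by (simp add: Fi_def)
  have core: "cg (psI (IUU n)) (Fs H E * fps_const (X + Q 0) * Fi)
      (fps_const X * Pw H E (of_int (\<alpha> k - \<alpha> (-k))) + R2s H E Q)"
    unfolding H_def E_def X_def Q_def
    by (rule coprod_core[OF IUU_ideal UU_rels[OF k1 kn aK] Finv[unfolded H_def E_def]])
  have TC: "twisted_coproduct k (fa_gen \<alpha>) = fps_nth (Fs H E * fps_const (X + Q 0) * Fi)"
    by (simp add: twisted_coproduct_def ps_mult_eq ps_const_eq fps_nth_inverse AF Fi_def coprod_gen
        X_def Q_def Qd0[OF k1 kn aK] fa_map_gen)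
  have DR: "DeltaRHS n k \<alpha> = fps_nth (fps_const X * Pw H E (of_int (\<alpha> k - \<alpha> (-k))) + R2s H E Q)"
    unfolding H_def E_def X_def Q_def by (rule DeltaRHS_eq[OF k1 kn aK])
  show "ps_cong (IUU n) (twisted_coproduct k (fa_gen \<alpha>)) (DeltaRHS n k \<alpha> :: _ \<Rightarrow> (_, 'a::field_char_0) falg)"
    using core[unfolded cg_psI] unfolding ps_cong_def TC DR cg_def by blast
next
  note k1 = assms(2) and kn = assms(3) and aK = assms(4)
  define h where "h = (fa_gen (hv k) :: (int \<Rightarrow> int, 'a) falg)"
  define e where "e = (fa_gen (ev k) :: (int \<Rightarrow> int, 'a) falg)"
  define x where "x = (fa_gen \<alpha> :: (int \<Rightarrow> int, 'a) falg)"
  define Vi where "Vi = Abs_fps (ps_inv (twistV k :: _ \<Rightarrow> (_, 'a) falg))"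
  have tV: "twistV k = fps_nth (Vs h e)" unfolding h_def e_def by (rule twistV_eq)
  have AV: "Abs_fps (twistV k) = Vs h e" by (simp add: tV fps_nth_inverse)
  have V0: "twistV k 0 = (1 :: (_, 'a) falg)" by (simp add: tV Vs_def ffp_0 evp_const)
  have Vinv: "Vs h e * Vi = 1" using ps_inv_right[of "twistV k", OF V0] AV by (simp add: Vi_def)
  have core: "cg (psI (IU n)) (Vs h e * fps_const (- x) * Vi)
      (- (Pw h e (- of_int (\<alpha> k - \<alpha> (-k))) * Zs h (Qd n k \<alpha>)))"
    unfolding h_def e_def x_def
    by (rule antipode_core[OF IU_ideal U_Re[OF k1 kn aK] U_Rx[OF k1 kn aK] U_RQ[OF k1 kn aK]
          U_RQe[OF k1 kn aK] Qd0[OF k1 kn aK] Vinv[unfolded h_def e_def]])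
  have TA: "twisted_antipode k (fa_gen \<alpha>) = fps_nth (Vs h e * fps_const (- x) * Vi)"
    by (simp add: twisted_antipode_def ps_mult_eq ps_const_eq fps_nth_inverse AV Vi_def antipode_gen x_def)
  have SR: "SRHS n k \<alpha> = fps_nth (- (Pw h e (- of_int (\<alpha> k - \<alpha> (-k))) * Zs h (Qd n k \<alpha>)))"
    unfolding h_def e_def by (rule SRHS_eq[OF k1 kn aK])
  show "ps_cong (IU n) (twisted_antipode k (fa_gen \<alpha>)) (SRHS n k \<alpha> :: _ \<Rightarrow> (_, 'a) falg)"
    using core[unfolded cg_psI] unfolding ps_cong_def TA SR cg_def by blast
qed


end
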